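(* Suppose $\sum_{m=0}^\infty2^{-\frac m2}\lambda_{d2^m}m^{\frac12}<\infty$ and the non-random initial values satisfy $\sum_{m=0}^\infty2^{-\frac m2}\max_{d2^m+1<i\le d2^{m+1}}|G_i(0)|\cdot\lambda_{d2^m}<\infty$. Then: (a) the process $X_t:=\sum_{i=1}^\infty G_i(\lambda_it)S_i$, $t\ge0$, has almost surely a continuous modification (as a $C_0([0,1];\mathbb R^d)$-valued process); (b) with $X^{(n)}_t:=\sum_{i=1}^nG_i(\lambda_it)S_i$, the finite dimensional distributions of $X^{(n)}$ converge weakly to those of $X$: for all $m\in\mathbb N$ and $0\le t_1<\dots<t_m$, the law of $(X^{(n)}_{t_1},\dots,X^{(n)}_{t_m})$ on $(C_0([0,1];\mathbb R^d))^m$ converges weakly to the law of $(X_{t_1},\dots,X_{t_m})$.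
   Context: Fix $d\in\mathbb N$, $(e_j)$ standard basis of $\mathbb R^d$. Haar functions: $H_1\equiv1$, $H_{2^m+k}=2^{m/2}$ on $[\frac{2k-2}{2^{m+1}},\frac{2k-1}{2^{m+1}})$, $-2^{m/2}$ on $[\frac{2k-1}{2^{m+1}},\frac{2k}{2^{m+1}})$, $0$ otherwise. $g_{d(r-1)+j}:=H_re_j$, $S_i(s):=\int_0^sg_i(u)du$. $C_0([0,1];\mathbb R^d)$: continuous $\gamma$ with $\gamma(0)=0$, sup norm. $0<\lambda_1\le\lambda_2\le\dots$ reals. $G_i$ are independent one-dimensional Ornstein–Uhlenbeck processes $dG_i=-G_i\,dt+\sqrt2\,dW_i$ with independent standard Wiener processes $W_i$ and non-random $G_i(0)$. *)

theory Defs
  imports "HOL-Probability.Probability"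
begin

text \<open>Haar functions indexed from 1: H 1 = 1, and for r = 2^m + k with 1 <= k <= 2^m,
  H r = 2^(m/2) on [(2k-2)/2^(m+1), (2k-1)/2^(m+1)), -2^(m/2) on
  [(2k-1)/2^(m+1), 2k/2^(m+1)), and 0 otherwise. H 0 is unused (set to 0).\<close>

definition haar_level :: "nat \<Rightarrow> nat" where
  "haar_level r = (THE m. 2 ^ m < r \<and> r \<le> 2 ^ (m + 1))"

definition haar :: "nat \<Rightarrow> real \<Rightarrow> real" where
  "haar r s =
    (if r = 0 then 0
     else if r = 1 then 1
     else (let m = haar_level r; k = r - 2 ^ m in
       if (2 * real k - 2) / 2 ^ (m + 1) \<le> s \<and> s < (2 * real k - 1) / 2 ^ (m + 1)
       then 2 powr (real m / 2)
       else if (2 * real k - 1) / 2 ^ (m + 1) \<le> s \<and> s < (2 * real k) / 2 ^ (m + 1)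
       then - (2 powr (real m / 2))
       else 0))"

text \<open>g_{d(r-1)+j} = H_r e_j for r >= 1, 1 <= j <= d, where e_1..e_d is the
  standard basis (given as an enumeration e of the basis).\<close>

definition haar_g :: "nat \<Rightarrow> (nat \<Rightarrow> 'a::real_vector) \<Rightarrow> nat \<Rightarrow> real \<Rightarrow> 'a" where
  "haar_g d e i s = haar ((i - 1) div d + 1) s *\<^sub>R e ((i - 1) mod d + 1)"

text \<open>S_i(s) = integral of g_i over [0,s], for s in [0,1]; paths are normalised
  to 0 outside [0,1] so that elements of C_0([0,1]) are genuine functions.\<close>

definition schauder_S :: "nat \<Rightarrow> (nat \<Rightarrow> 'a::euclidean_space) \<Rightarrow> nat \<Rightarrow> real \<Rightarrow> 'a" where
  "schauder_S d e i s = (if 0 \<le> s \<and> s \<le> 1 then integral {0..s} (haar_g d e i) else 0)"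

definition C0 :: "(real \<Rightarrow> 'a::real_normed_vector) set" where
  "C0 = {\<gamma>. continuous_on {0..1} \<gamma> \<and> \<gamma> 0 = 0 \<and> (\<forall>s. s \<notin> {0..1} \<longrightarrow> \<gamma> s = 0)}"

definition supdist :: "(real \<Rightarrow> 'a::real_normed_vector) \<Rightarrow> (real \<Rightarrow> 'a) \<Rightarrow> real" where
  "supdist \<gamma> \<eta> = (SUP s\<in>{0..1}. norm (\<gamma> s - \<eta> s))"

text \<open>product (max) distance on (C_0)^m, tuples represented as lists of length m\<close>
definition tupledist :: "(real \<Rightarrow> 'a::real_normed_vector) list \<Rightarrow> (real \<Rightarrow> 'a) list \<Rightarrow> real" where
  "tupledist \<Gamma> \<Delta> = Max (insert 0 {supdist (\<Gamma> ! k) (\<Delta> ! k) | k. k < length \<Gamma>})"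

definition C0_tuples :: "nat \<Rightarrow> (real \<Rightarrow> 'a::real_normed_vector) list set" where
  "C0_tuples m = {\<Gamma>. length \<Gamma> = m \<and> set \<Gamma> \<subseteq> C0}"

definition bcont_test :: "nat \<Rightarrow> ((real \<Rightarrow> 'a::real_normed_vector) list \<Rightarrow> real) \<Rightarrow> bool" where
  "bcont_test m F \<longleftrightarrow>
     (\<exists>B. \<forall>\<Gamma>\<in>C0_tuples m. \<bar>F \<Gamma>\<bar> \<le> B) \<and>
     (\<forall>\<Gamma>\<in>C0_tuples m. \<forall>\<epsilon>>0. \<exists>\<delta>>0. \<forall>\<Delta>\<in>C0_tuples m.
         tupledist \<Gamma> \<Delta> < \<delta> \<longrightarrow> \<bar>F \<Delta> - F \<Gamma>\<bar> < \<epsilon>)"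

definition weak_conv_C0_tuples ::
  "'w measure \<Rightarrow> nat \<Rightarrow> (nat \<Rightarrow> 'w \<Rightarrow> (real \<Rightarrow> 'a::real_normed_vector) list) \<Rightarrow> ('w \<Rightarrow> (real \<Rightarrow> 'a) list) \<Rightarrow> bool" where
  "weak_conv_C0_tuples M m Z Z' \<longleftrightarrow>
     (\<forall>F. bcont_test m F \<longrightarrow>
        (\<lambda>n. integral\<^sup>L M (\<lambda>\<omega>. F (Z n \<omega>))) \<longlonglongrightarrow> integral\<^sup>L M (\<lambda>\<omega>. F (Z' \<omega>)))"

definition wiener_process :: "'w measure \<Rightarrow> (real \<Rightarrow> 'w \<Rightarrow> real) \<Rightarrow> bool" where
  "wiener_process M W \<longleftrightarrow>
     (\<forall>t\<ge>0. W t \<in> borel_measurable M) \<and>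
     (\<forall>\<omega>\<in>space M. W 0 \<omega> = 0) \<and>
     (AE \<omega> in M. continuous_on {0..} (\<lambda>t. W t \<omega>)) \<and>
     (\<forall>s t. 0 \<le> s \<longrightarrow> s < t \<longrightarrow>
        distributed M lborel (\<lambda>\<omega>. W t \<omega> - W s \<omega>) (normal_density 0 (sqrt (t - s)))) \<and>
     (\<forall>(ts :: nat \<Rightarrow> real) n. 0 \<le> ts 0 \<longrightarrow> (\<forall>k<n. ts k < ts (Suc k)) \<longrightarrow>
        prob_space.indep_vars M (\<lambda>_. borel) (\<lambda>k \<omega>. W (ts (Suc k)) \<omega> - W (ts k) \<omega>) {..<n})"

text \<open>G solves dG = -G dt + sqrt 2 dW with non-random G(0) = x; since the noise is
  additive, this is the pathwise integral equation
  G(t) = x - int_0^t G(u) du + sqrt 2 W(t).\<close>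
definition ou_process :: "'w measure \<Rightarrow> (real \<Rightarrow> 'w \<Rightarrow> real) \<Rightarrow> real \<Rightarrow> (real \<Rightarrow> 'w \<Rightarrow> real) \<Rightarrow> bool" where
  "ou_process M W x G \<longleftrightarrow>
     (\<forall>t\<ge>0. G t \<in> borel_measurable M) \<and>
     (\<forall>\<omega>\<in>space M. G 0 \<omega> = x) \<and>
     (AE \<omega> in M. continuous_on {0..} (\<lambda>t. G t \<omega>) \<and>
        (\<forall>t\<ge>0. G t \<omega> = x - integral {0..t} (\<lambda>u. G u \<omega>) + sqrt 2 * W t \<omega>))"

definition partial_X ::
  "nat \<Rightarrow> (nat \<Rightarrow> 'a::euclidean_space) \<Rightarrow> (nat \<Rightarrow> real) \<Rightarrow> (nat \<Rightarrow> real \<Rightarrow> 'w \<Rightarrow> real)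
     \<Rightarrow> nat \<Rightarrow> real \<Rightarrow> 'w \<Rightarrow> real \<Rightarrow> 'a" where
  "partial_X d e lam G n t \<omega> = (\<lambda>s. \<Sum>i\<in>{1..n}. G i (lam i * t) \<omega> *\<^sub>R schauder_S d e i s)"

end

theory Submission
  imports Defs
begin

lemma pw1: "2 powr (real m / 2) = sqrt 2 ^ m"
proof -
  have "2 powr (real m / 2) = (2 powr (1/2)) ^ m" by (simp add: powr_power)
  then show ?thesis by (simp add: powr_half_sqrt)
qed

lemma pw2: "2 powr (- real m / 2) = 1 / sqrt 2 ^ m"
proof -
  have e: "- real m / 2 = - (real m / 2)" by simp
  have "2 powr (- real m / 2) = inverse (2 powr (real m / 2))" unfolding e by (rule powr_minus)
  then show ?thesis by (simp only: pw1 inverse_eq_divide)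
qed

lemma pw3: "2 powr (real m / 2) / 2 ^ (m + 1) = 1/2 * (1 / sqrt 2 ^ m)"
proof -
  have "sqrt 2 ^ m * sqrt 2 ^ m = (sqrt 2 * sqrt 2::real) ^ m" by (rule power_mult_distrib[symmetric])
  then have "(2::real) ^ m = sqrt 2 ^ m * sqrt 2 ^ m" by simp
  then have e: "(2::real) ^ (m + 1) = 2 * (sqrt 2 ^ m * sqrt 2 ^ m)" by simp
  have g: "a / (2 * (a * a)) = 1/2 * (1 / a)" if "0 < a" for a :: real using that by simp
  show ?thesis unfolding pw1 e by (rule g) simp
qed

lemma haar_level_eq:
  assumes "2 ^ m < r" "r \<le> 2 ^ (m + 1)"
  shows "haar_level r = m"
  unfolding haar_level_def
proof (rule the_equality)
  show "2 ^ m < r \<and> r \<le> 2 ^ (m + 1)" using assms by simp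
next
  fix m' assume h: "2 ^ m' < r \<and> r \<le> 2 ^ (m' + 1)"
  show "m' = m"
  proof (rule ccontr)
    assume "m' \<noteq> m"
    then consider "m' + 1 \<le> m" | "m + 1 \<le> m'" by linarith
    then show False
    proof cases
      case 1
      then have "(2::nat) ^ (m' + 1) \<le> 2 ^ m" by (intro power_increasing) auto
      then show False using h assms by linarith
    next
      case 2
      then have "(2::nat) ^ (m + 1) \<le> 2 ^ m'" by (intro power_increasing) auto
      then show False using h assms by linarith
    qed
  qed
qed

lemma haar_level_ex:
  fixes r :: nat
  assumes "2 \<le> r"
  shows "\<exists>m. 2 ^ m < r \<and> r \<le> 2 ^ (m + 1)"
proof -
  have ex: "\<exists>m. r \<le> 2 ^ (m + 1)"
    by (rule exI[of _ r]) (metis less_exp Suc_eq_plus1 less_imp_le_nat power_Suc less_le_trans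
        le_less_trans less_or_eq_imp_le mult_2 le_add2)
  define m where "m = (LEAST m. r \<le> 2 ^ (m + 1))"
  have m1: "r \<le> 2 ^ (m + 1)" unfolding m_def by (rule LeastI_ex[OF ex])
  have m2: "2 ^ m < r"
  proof (cases m)
    case 0 then show ?thesis using assms by simp
  next
    case (Suc m')
    have "\<not> r \<le> 2 ^ (m' + 1)"
    proof
      assume "r \<le> 2 ^ (m' + 1)"
      then have "m \<le> m'" unfolding m_def by (rule Least_le)
      then show False using Suc by simp
    qed
    then show ?thesis using Suc by simp
  qed
  show ?thesis using m1 m2 by blast
qed

definition hphi :: "nat \<Rightarrow> real \<Rightarrow> real" where
  "hphi r s = (if r = 1 then s else
     (let m = haar_level r; k = r - 2 ^ m;
          a = (2 * real k - 2) / 2 ^ (m + 1); b = (2 * real k - 1) / 2 ^ (m + 1);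
          c = (2 * real k) / 2 ^ (m + 1); h = 2 powr (real m / 2)
      in h * (min (max s a) b - a) - h * (min (max s b) c - b)))"

lemma haar_explicit:
  assumes "2 ^ m < r" "r \<le> 2 ^ (m + 1)"
  defines "k \<equiv> r - 2 ^ m"
  defines "a \<equiv> (2 * real k - 2) / 2 ^ (m + 1)" and "b \<equiv> (2 * real k - 1) / 2 ^ (m + 1)"
    and "c \<equiv> (2 * real k) / 2 ^ (m + 1)" and "h \<equiv> 2 powr (real m / 2)"
  shows "haar r s = (if a \<le> s \<and> s < b then h else if b \<le> s \<and> s < c then - h else 0)"
    and "hphi r s = h * (min (max s a) b - a) - h * (min (max s b) c - b)"
    and "1 \<le> k" "k \<le> 2 ^ m" "a < b" "b < c" "0 \<le> a" "c \<le> 1" "b - a = c - b"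
    and "a = (real k - 1) / 2 ^ m" "c = real k / 2 ^ m" "b - a = 1 / 2 ^ (m+1)"
proof -
  have r0: "r \<noteq> 0" "r \<noteq> 1" using assms(1) by (auto simp: le_less_trans[of 1 "2^m" r])
  have lev: "haar_level r = m" by (rule haar_level_eq[OF assms(1,2)])
  show "haar r s = (if a \<le> s \<and> s < b then h else if b \<le> s \<and> s < c then - h else 0)"
    using r0 unfolding haar_def lev Let_def a_def b_def c_def h_def k_def by simp
  show "hphi r s = h * (min (max s a) b - a) - h * (min (max s b) c - b)"
    using r0 unfolding hphi_def lev Let_def a_def b_def c_def h_def k_def by simp
  show k1: "1 \<le> k" "k \<le> 2 ^ m" using assms(1,2) unfolding k_def by auto
  have p: "(2::real) ^ (m+1) > 0" by simp
  show "a < b" "b < c" unfolding a_def b_def c_def using p by (auto simp: field_simps)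
  have "real k \<ge> 1" using k1 by simp
  then show "0 \<le> a" unfolding a_def by simp
  have "real k \<le> 2 ^ m" using k1 by (metis of_nat_le_iff of_nat_numeral of_nat_power)
  then show "c \<le> 1" unfolding c_def by (simp add: field_simps)
  show "b - a = c - b" unfolding a_def b_def c_def by (simp add: field_simps)
  show "a = (real k - 1) / 2 ^ m" "c = real k / 2 ^ m" "b - a = 1 / 2 ^ (m+1)"
    unfolding a_def b_def c_def by (auto simp: field_simps)
qed

lemma hphi_has_integral:
  assumes r: "1 \<le> r" and s: "0 \<le> s"
  shows "(haar r has_integral hphi r s) {0..s}"
proof (cases "r = 1")
  case True
  note has_integral_const_real[of "1::real" 0 s]
  moreover have "haar r = (\<lambda>x. 1)" using True by (simp add: haar_def fun_eq_iff)
  ultimately show ?thesis using True s by (simp add: hphi_def)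
next
  case False
  then have "2 \<le> r" using r by simp
  then obtain m where m: "2 ^ m < r" "r \<le> 2 ^ (m + 1)" using haar_level_ex by blast
  define k where "k = r - 2 ^ m"
  define a where "a = (2 * real k - 2) / 2 ^ (m + 1)"
  define b where "b = (2 * real k - 1) / 2 ^ (m + 1)"
  define c where "c = (2 * real k) / 2 ^ (m + 1)"
  define h where "h = (2::real) powr (real m / 2)"
  note E = haar_explicit[OF m, folded k_def, folded a_def b_def c_def h_def]
  define \<Phi> where "\<Phi> = (\<lambda>s. h * (min (max s a) b - a) - h * (min (max s b) c - b))"
  have hp: "hphi r = \<Phi>" using E(2) unfolding \<Phi>_def by (simp add: fun_eq_iff)
  have hr: "haar r x = (if a \<le> x \<and> x < b then h else if b \<le> x \<and> x < c then - h else 0)" for x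
    using E(1) .
  have ab: "a < b" and bc: "b < c" and a0: "0 \<le> a" using E by auto
  have der: "(\<Phi> has_vector_derivative haar r x) (at x)" if x: "x \<notin> {a, b, c}" for x
  proof -
    consider "x < a" | "a < x" "x < b" | "b < x" "x < c" | "c < x" using x by force
    then show ?thesis
    proof cases
      case 1
      have "((\<lambda>z. 0::real) has_vector_derivative 0) (at x)" by (rule has_vector_derivative_const)
      then have "(\<Phi> has_vector_derivative 0) (at x)"
        by (rule has_vector_derivative_transform_within_open[where S="{..<a}"])
           (use 1 ab bc in \<open>auto simp: \<Phi>_def\<close>)
      then show ?thesis using 1 ab bc hr[of x] by simp
    next
      case 2
      have "((\<lambda>z. h * (z - a)) has_vector_derivative h) (at x)"
        unfolding has_real_derivative_iff_has_vector_derivative[symmetric]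
        by (auto intro!: derivative_eq_intros)
      then have "(\<Phi> has_vector_derivative h) (at x)"
        by (rule has_vector_derivative_transform_within_open[where S="{a<..<b}"])
           (use 2 ab bc in \<open>auto simp: \<Phi>_def\<close>)
      then show ?thesis using 2 ab bc hr[of x] by simp
    next
      case 3
      have "((\<lambda>z. h * (b - a) - h * (z - b)) has_vector_derivative - h) (at x)"
        unfolding has_real_derivative_iff_has_vector_derivative[symmetric]
        by (auto intro!: derivative_eq_intros)
      then have "(\<Phi> has_vector_derivative - h) (at x)"
        by (rule has_vector_derivative_transform_within_open[where S="{b<..<c}"])
           (use 3 ab bc in \<open>auto simp: \<Phi>_def\<close>)
      then show ?thesis using 3 ab bc hr[of x] by simp
    next
      case 4
      have "((\<lambda>z. h * (b - a) - h * (c - b)) has_vector_derivative 0) (at x)" by (rule has_vector_derivative_const)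
      then have "(\<Phi> has_vector_derivative 0) (at x)"
        by (rule has_vector_derivative_transform_within_open[where S="{c<..}"])
           (use 4 ab bc in \<open>auto simp: \<Phi>_def\<close>)
      then show ?thesis using 4 ab bc hr[of x] by simp
    qed
  qed
  have cont: "continuous_on {0..s} \<Phi>" unfolding \<Phi>_def by (intro continuous_intros)
  have "(haar r has_integral (\<Phi> s - \<Phi> 0)) {0..s}"
    by (rule fundamental_theorem_of_calculus_interior_strong[where S="{a,b,c}"])
       (use s cont der in auto)
  moreover have "\<Phi> 0 = 0" using a0 ab bc unfolding \<Phi>_def by simp
  ultimately show ?thesis using hp by simp
qed

lemma hphi_cont: "continuous_on S (hphi r)"
proof (cases "r = 1")
  case True
  then have "hphi r = (\<lambda>s. s)" by (simp add: hphi_def fun_eq_iff)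
  then show ?thesis by (simp add: continuous_on_id)
next
  case False
  then show ?thesis unfolding hphi_def Let_def by (simp; intro continuous_intros)
qed

lemma hphi_0: assumes "1 \<le> r" shows "hphi r 0 = 0"
proof -
  have "(haar r has_integral hphi r 0) {0}" using hphi_has_integral[OF assms, of 0] by simp
  moreover have "(haar r has_integral 0) {0}" by (rule has_integral_refl)
  ultimately show ?thesis by (rule has_integral_unique)
qed

lemma hphi_level:
  assumes "2 ^ m < r" "r \<le> 2 ^ (m + 1)"
  shows "\<bar>hphi r s\<bar> \<le> 2 powr (real m / 2) / 2 ^ (m + 1)"
    and "hphi r s \<noteq> 0 \<Longrightarrow> (real (r - 2 ^ m) - 1) / 2 ^ m < s \<and> s < real (r - 2 ^ m) / 2 ^ m"
proof -
  define k where "k = r - 2 ^ m"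
  define a where "a = (2 * real k - 2) / 2 ^ (m + 1)"
  define b where "b = (2 * real k - 1) / 2 ^ (m + 1)"
  define c where "c = (2 * real k) / 2 ^ (m + 1)"
  define h where "h = (2::real) powr (real m / 2)"
  note E = haar_explicit[OF assms, folded k_def, folded a_def b_def c_def h_def]
  have h0: "h > 0" unfolding h_def by simp
  have ab: "a < b" "b < c" "b - a = c - b" using E by auto
  have t1: "0 \<le> min (max s a) b - a" "min (max s a) b - a \<le> b - a" using ab by auto
  have t2: "0 \<le> min (max s b) c - b" "min (max s b) c - b \<le> b - a" using ab by auto
  have "\<bar>h * (min (max s a) b - a) - h * (min (max s b) c - b)\<bar> \<le> h * (b - a)"
  proof -
    have "h * (min (max s a) b - a) \<le> h * (b - a)" "h * (min (max s b) c - b) \<le> h * (b - a)"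
      "0 \<le> h * (min (max s a) b - a)" "0 \<le> h * (min (max s b) c - b)"
      using t1 t2 h0 by (auto intro: mult_left_mono)
    then show ?thesis by linarith
  qed
  then show "\<bar>hphi r s\<bar> \<le> 2 powr (real m / 2) / 2 ^ (m + 1)"
    using E(2,12) unfolding h_def by simp
  assume nz: "hphi r s \<noteq> 0"
  have "\<not> s \<le> a" using nz E(2) ab by auto
  moreover have "\<not> s \<ge> c" using nz E(2) ab by auto
  ultimately show "(real (r - 2 ^ m) - 1) / 2 ^ m < s \<and> s < real (r - 2 ^ m) / 2 ^ m"
    using E(10,11) unfolding k_def by auto
qed

lemma schauder_S_eq:
  "schauder_S d e i s = (if 0 \<le> s \<and> s \<le> 1 then hphi ((i - 1) div d + 1) s *\<^sub>R e ((i - 1) mod d + 1) else 0)"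
proof -
  have "(haar_g d e i has_integral hphi ((i - 1) div d + 1) s *\<^sub>R e ((i - 1) mod d + 1)) {0..s}" if "0 \<le> s"
    unfolding haar_g_def[abs_def]
    by (rule has_integral_scaleR_left[OF hphi_has_integral]) (use that in auto)
  then show ?thesis unfolding schauder_S_def by (auto dest: integral_unique)
qed

lemma schauder_S_C0: "schauder_S d e i \<in> C0"
proof -
  let ?r = "(i - 1) div d + 1" and ?j = "(i - 1) mod d + 1"
  have "continuous_on {0..1} (\<lambda>s. hphi ?r s *\<^sub>R e ?j)"
    by (intro continuous_intros hphi_cont)
  then have "continuous_on {0..1} (schauder_S d e i)"
    by (rule continuous_on_eq) (auto simp: schauder_S_eq)
  moreover have "schauder_S d e i 0 = 0" by (simp add: schauder_S_eq hphi_0)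
  ultimately show ?thesis unfolding C0_def by (auto simp: schauder_S_eq)
qed

lemma level_r:
  fixes d m i :: nat
  assumes "1 \<le> d" "d * 2 ^ m < i" "i \<le> d * 2 ^ (m + 1)"
  shows "2 ^ m < (i - 1) div d + 1" "(i - 1) div d + 1 \<le> 2 ^ (m + 1)"
proof -
  have "d * 2 ^ m \<le> i - 1" using assms by linarith
  then have "2 ^ m \<le> (i - 1) div d" using assms(1)
    by (metis div_le_mono nonzero_mult_div_cancel_left not_one_le_zero)
  then show "2 ^ m < (i - 1) div d + 1" by simp
  have "i - 1 < d * 2 ^ (m + 1)" using assms by linarith
  then have "(i - 1) div d < 2 ^ (m + 1)" using assms(1)
    by (simp add: div_less_iff_less_mult mult.commute)
  then show "(i - 1) div d + 1 \<le> 2 ^ (m + 1)" by simp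
qed

lemma level_sum_bound:
  fixes d m :: nat and e :: "nat \<Rightarrow> 'a::euclidean_space" and cf :: "nat \<Rightarrow> real"
  assumes d: "1 \<le> d" and en: "\<And>j. 1 \<le> j \<Longrightarrow> j \<le> d \<Longrightarrow> norm (e j) = 1"
    and A: "finite A" "A \<subseteq> {d * 2 ^ m <.. d * 2 ^ (m + 1)}"
    and B: "\<And>i. i \<in> A \<Longrightarrow> \<bar>cf i\<bar> \<le> B" "0 \<le> B"
  shows "norm (\<Sum>i\<in>A. cf i *\<^sub>R schauder_S d e i s) \<le> real d * B * (2 powr (real m / 2) / 2 ^ (m + 1))"
proof (cases "0 \<le> s \<and> s \<le> 1")
  case False
  then have "schauder_S d e i s = 0" for i unfolding schauder_S_eq by auto
  then show ?thesis using B by simp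
next
  case True
  define \<beta> where "\<beta> = (2::real) powr (real m / 2) / 2 ^ (m + 1)"
  have \<beta>0: "0 \<le> \<beta>" unfolding \<beta>_def by simp
  define r where "r = (\<lambda>i::nat. (i - 1) div d + 1)"
  define j where "j = (\<lambda>i::nat. (i - 1) mod d + 1)"
  have lev: "2 ^ m < r i" "r i \<le> 2 ^ (m + 1)" if "i \<in> A" for i
    using level_r[OF d, of m i] that A(2) unfolding r_def by auto
  have nj: "norm (e (j i)) = 1" for i
    unfolding j_def using d by (intro en) (auto simp: Suc_le_eq)
  define A' where "A' = {i\<in>A. hphi (r i) s \<noteq> 0}"
  have "norm (\<Sum>i\<in>A. cf i *\<^sub>R schauder_S d e i s) \<le> (\<Sum>i\<in>A. norm (cf i *\<^sub>R schauder_S d e i s))"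
    by (rule norm_sum)
  also have "\<dots> = (\<Sum>i\<in>A. \<bar>cf i\<bar> * \<bar>hphi (r i) s\<bar>)"
    using True nj[unfolded j_def] by (simp add: schauder_S_eq r_def abs_mult)
  also have "\<dots> = (\<Sum>i\<in>A'. \<bar>cf i\<bar> * \<bar>hphi (r i) s\<bar>)"
    by (rule sum.mono_neutral_right) (use A in \<open>auto simp: A'_def\<close>)
  also have "\<dots> \<le> (\<Sum>i\<in>A'. B * \<beta>)"
    by (rule sum_mono, rule mult_mono) (use B hphi_level(1)[OF lev] in \<open>auto simp: A'_def \<beta>_def\<close>)
  also have "\<dots> = real (card A') * (B * \<beta>)" by simp
  also have "\<dots> \<le> real d * (B * \<beta>)"
  proof (rule mult_right_mono)
    show "0 \<le> B * \<beta>" using B \<beta>0 by simp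
    show "real (card A') \<le> real d"
    proof (cases "A' = {}")
      case True then show ?thesis by simp
    next
      case False
      then obtain i0 where i0: "i0 \<in> A'" by blast
      have same: "r i = r i0" if "i \<in> A'" for i
      proof -
        have iA: "i \<in> A" "i0 \<in> A" using that i0 by (auto simp: A'_def)
        have s1: "(real (r i - 2 ^ m) - 1) / 2 ^ m < s \<and> s < real (r i - 2 ^ m) / 2 ^ m"
          using hphi_level(2)[OF lev[OF iA(1)]] that by (auto simp: A'_def)
        have s2: "(real (r i0 - 2 ^ m) - 1) / 2 ^ m < s \<and> s < real (r i0 - 2 ^ m) / 2 ^ m"
          using hphi_level(2)[OF lev[OF iA(2)]] i0 by (auto simp: A'_def)
        have "real (r i - 2 ^ m) - 1 < s * 2 ^ m" "s * 2 ^ m < real (r i - 2 ^ m)"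
          "real (r i0 - 2 ^ m) - 1 < s * 2 ^ m" "s * 2 ^ m < real (r i0 - 2 ^ m)"
          using s1 s2 by (auto simp: field_simps)
        then have "real (r i - 2 ^ m) < real (r i0 - 2 ^ m) + 1" "real (r i0 - 2 ^ m) < real (r i - 2 ^ m) + 1"
          by linarith+
        then have "r i - 2 ^ m = r i0 - 2 ^ m" by linarith
        then show ?thesis using lev[OF iA(1)] lev[OF iA(2)] by linarith
      qed
      have sub: "A' \<subseteq> {d * (r i0 - 1) + 1 .. d * (r i0 - 1) + d}"
      proof
        fix i assume iA': "i \<in> A'"
        then have "i \<ge> 1" using A(2) by (auto simp: A'_def)
        have eq: "i - 1 = d * ((i - 1) div d) + (i - 1) mod d" by simp
        have "(i - 1) mod d < d" using d by simp
        moreover have "(i - 1) div d = r i0 - 1" using same[OF iA'] unfolding r_def by simp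
        ultimately show "i \<in> {d * (r i0 - 1) + 1 .. d * (r i0 - 1) + d}"
          using eq \<open>i \<ge> 1\<close> by auto
      qed
      have "card A' \<le> card {d * (r i0 - 1) + 1 .. d * (r i0 - 1) + d}"
        by (rule card_mono[OF _ sub]) simp
      then show ?thesis by simp
    qed
  qed
  finally show ?thesis unfolding \<beta>_def by (simp add: mult.assoc)
qed

lemma geom_le:
  fixes q :: real assumes "0 \<le> q" "q < 1"
  shows "(\<Sum>n\<le>N. q ^ n) \<le> 1 / (1 - q)"
proof -
  have "(1 - q) * (\<Sum>n\<le>N. q ^ n) = 1 - q ^ Suc N" by (rule sum_gp_basic)
  also have "\<dots> \<le> 1" using assms by simp
  finally show ?thesis using assms by (simp add: field_simps mult.commute)
qed

lemma chain_dyadic: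
  fixes f :: "real \<Rightarrow> real"
  assumes f0: "f 0 = 0" and A: "0 \<le> A" and q: "0 \<le> q"
    and inc: "\<And>n k. k < (2::nat) ^ n \<Longrightarrow> \<bar>f ((real k + 1) * L / 2 ^ n) - f (real k * L / 2 ^ n)\<bar> \<le> A * q ^ n"
  shows "j \<le> (2::nat) ^ N \<Longrightarrow> \<bar>f (real j * L / 2 ^ N)\<bar> \<le> A * (\<Sum>n\<le>N. q ^ n)"
proof (induction N arbitrary: j)
  case 0
  then consider "j = 0" | "j = 1" by force
  then show ?case
  proof cases
    case 1 then show ?thesis using f0 A by simp
  next
    case 2 then show ?thesis using inc[of 0 0] f0 by simp
  qed
next
  case (Suc N)
  have S0: "0 \<le> A * q ^ Suc N" using A q by simp
  obtain j' where j': "j = 2 * j' \<or> j = 2 * j' + 1" by (metis oddE evenE)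
  then show ?case
  proof
    assume jj: "j = 2 * j'"
    then have "j' \<le> 2 ^ N" using Suc.prems by simp
    then have "\<bar>f (real j' * L / 2 ^ N)\<bar> \<le> A * (\<Sum>n\<le>N. q ^ n)" by (rule Suc.IH)
    moreover have "real j * L / 2 ^ Suc N = real j' * L / 2 ^ N" using jj by simp
    ultimately show ?thesis using S0 by (simp add: distrib_left)
  next
    assume jj: "j = 2 * j' + 1"
    then have "j' < 2 ^ N" using Suc.prems by simp
    then have "j' \<le> 2 ^ N" by simp
    then have IH: "\<bar>f (real j' * L / 2 ^ N)\<bar> \<le> A * (\<Sum>n\<le>N. q ^ n)" by (rule Suc.IH)
    have k: "2 * j' < 2 ^ Suc N" using \<open>j' < 2 ^ N\<close> by simp
    have I: "\<bar>f ((real (2 * j') + 1) * L / 2 ^ Suc N) - f (real (2 * j') * L / 2 ^ Suc N)\<bar> \<le> A * q ^ Suc N"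
      by (rule inc[OF k])
    have e1: "real (2 * j') * L / 2 ^ Suc N = real j' * L / 2 ^ N" by simp
    have e2: "(real (2 * j') + 1) * L / 2 ^ Suc N = real j * L / 2 ^ Suc N" using jj by simp
    show ?thesis using IH I unfolding e1 e2 by (simp add: distrib_left)
  qed
qed

lemma chain_bound:
  fixes f :: "real \<Rightarrow> real"
  assumes f0: "f 0 = 0" and A: "0 \<le> A" and q: "0 \<le> q" "q < 1" and L: "0 \<le> L"
    and cont: "continuous_on {0..L} f"
    and inc: "\<And>n k. k < (2::nat) ^ n \<Longrightarrow> \<bar>f ((real k + 1) * L / 2 ^ n) - f (real k * L / 2 ^ n)\<bar> \<le> A * q ^ n"
    and u: "u \<in> {0..L}"
  shows "\<bar>f u\<bar> \<le> A / (1 - q)"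
proof -
  have dy: "\<bar>f (real j * L / 2 ^ N)\<bar> \<le> A / (1 - q)" if "j \<le> 2 ^ N" for j N
  proof -
    have "\<bar>f (real j * L / 2 ^ N)\<bar> \<le> A * (\<Sum>n\<le>N. q ^ n)"
      by (rule chain_dyadic[OF f0 A q(1) inc that])
    also have "\<dots> \<le> A * (1 / (1 - q))" by (rule mult_left_mono[OF geom_le[OF q] A])
    finally show ?thesis by simp
  qed
  show ?thesis
  proof (cases "L = 0")
    case True
    then have "u = 0" using u by simp
    then show ?thesis using f0 A q by simp
  next
    case False
    then have Lp: "L > 0" using L by simp
    define j where "j = (\<lambda>N::nat. nat \<lfloor>u * 2 ^ N / L\<rfloor>)"
    define v where "v = (\<lambda>N. real (j N) * L / 2 ^ N)"
    have jle: "j N \<le> 2 ^ N" for N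
    proof -
      have "u * 2 ^ N / L \<le> 2 ^ N" using u Lp by (simp add: field_simps)
      then have "\<lfloor>u * 2 ^ N / L\<rfloor> \<le> 2 ^ N" by (metis floor_mono floor_of_nat of_nat_numeral of_nat_power)
      then show ?thesis unfolding j_def by (simp add: nat_le_iff)
    qed
    have jv: "real (j N) = of_int \<lfloor>u * 2 ^ N / L\<rfloor>" for N
      unfolding j_def using u Lp by simp
    have vb: "u - L / 2 ^ N \<le> v N \<and> v N \<le> u" for N
    proof -
      have a: "of_int \<lfloor>u * 2 ^ N / L\<rfloor> \<le> u * 2 ^ N / L" "u * 2 ^ N / L < of_int \<lfloor>u * 2 ^ N / L\<rfloor> + 1"
        by linarith+
      have vv: "v N = of_int \<lfloor>u * 2 ^ N / L\<rfloor> * L / 2 ^ N" unfolding v_def jv ..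
      have "of_int \<lfloor>u * 2 ^ N / L\<rfloor> * L / 2 ^ N \<le> (u * 2 ^ N / L) * L / 2 ^ N"
        using a(1) Lp by (intro divide_right_mono mult_right_mono) auto
      also have "\<dots> = u" using Lp by simp
      finally have 1: "v N \<le> u" using vv by simp
      have "(u * 2 ^ N / L - 1) * L / 2 ^ N \<le> of_int \<lfloor>u * 2 ^ N / L\<rfloor> * L / 2 ^ N"
        using a(2) Lp by (intro divide_right_mono mult_right_mono) auto
      moreover have "(u * 2 ^ N / L - 1) * L / 2 ^ N = u - L / 2 ^ N" using Lp by (simp add: field_simps)
      ultimately have 2: "u - L / 2 ^ N \<le> v N" using vv by simp
      show ?thesis using 1 2 by simp
    qed
    have vin: "v N \<in> {0..L}" for N
      using jle[of N] u Lp unfolding v_def by (auto simp: field_simps)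
    have "(\<lambda>N. u - L / 2 ^ N) \<longlonglongrightarrow> u - 0"
      by (intro tendsto_intros LIMSEQ_divide_realpow_zero) simp
    then have "v \<longlonglongrightarrow> u"
      by (intro real_tendsto_sandwich[of "\<lambda>N. u - L / 2 ^ N" v sequentially "\<lambda>N. u"]) (use vb in auto)
    then have "(\<lambda>N. f (v N)) \<longlonglongrightarrow> f u"
      by (rule continuous_on_tendsto_compose[OF cont]) (use u vin in auto)
    then have "(\<lambda>N. \<bar>f (v N)\<bar>) \<longlonglongrightarrow> \<bar>f u\<bar>" by (rule tendsto_rabs)
    then show ?thesis
      by (rule LIMSEQ_le_const2) (use dy jle in \<open>auto simp: v_def\<close>)
  qed
qed

lemma ou_bound:
  fixes G W :: "real \<Rightarrow> real"
  assumes contG: "continuous_on {0..} G" and contW: "continuous_on {0..} W"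
    and eq: "\<And>t. 0 \<le> t \<Longrightarrow> G t = x - integral {0..t} G + sqrt 2 * W t"
    and L: "0 \<le> L" and Wb: "\<And>u. u \<in> {0..L} \<Longrightarrow> \<bar>W u\<bar> \<le> A"
    and t: "t \<in> {0..L}"
  shows "\<bar>G t\<bar> \<le> \<bar>x\<bar> + 3 * A"
proof -
  have A0: "0 \<le> A" using Wb[of 0] L by auto
  have cG: "continuous_on {0..L} G" by (rule continuous_on_subset[OF contG]) auto
  have cW: "continuous_on {0..L} W" by (rule continuous_on_subset[OF contW]) auto
  have cEW: "continuous_on {0..L} (\<lambda>u. exp u * W u)" by (intro continuous_intros cW)
  define V where "V = (\<lambda>t. x - integral {0..t} G)"
  define \<Phi> where "\<Phi> = (\<lambda>t. exp t * V t + sqrt 2 * integral {0..t} (\<lambda>u. exp u * W u))"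
  have der: "(\<Phi> has_real_derivative 0) (at s within {0..L})" if s: "s \<in> {0..L}" for s
  proof -
    have d1: "((\<lambda>x. integral {0..x} G) has_real_derivative G s) (at s within {0..L})"
      by (rule integral_has_real_derivative[OF cG s])
    have d2: "((\<lambda>x. integral {0..x} (\<lambda>u. exp u * W u)) has_real_derivative exp s * W s) (at s within {0..L})"
      by (rule integral_has_real_derivative[OF cEW s])
    have "(\<Phi> has_real_derivative (exp s * V s + exp s * (- G s) + sqrt 2 * (exp s * W s))) (at s within {0..L})"
      unfolding \<Phi>_def V_def
      by (rule derivative_eq_intros d1 d2 refl | simp)+
    moreover have "exp s * V s + exp s * (- G s) + sqrt 2 * (exp s * W s) = 0"
    proof -
      have "V s - G s + sqrt 2 * W s = 0" using eq[of s] s unfolding V_def by simp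
      moreover have "exp s * V s + exp s * (- G s) + sqrt 2 * (exp s * W s) = exp s * (V s - G s + sqrt 2 * W s)"
        by (simp add: algebra_simps)
      ultimately show ?thesis by simp
    qed
    ultimately show ?thesis by simp
  qed
  obtain c where c: "\<And>s. s \<in> {0..L} \<Longrightarrow> \<Phi> s = c"
    using has_field_derivative_zero_constant[of "{0..L}" \<Phi>] der by auto
  have "\<Phi> 0 = x" unfolding \<Phi>_def V_def by simp
  then have Pt: "\<Phi> t = x" using c[of t] c[of 0] L t by simp
  have ti: "0 \<le> t" "t \<le> L" using t by auto
  have cEWt: "continuous_on {0..t} (\<lambda>u. exp u * W u)" by (rule continuous_on_subset[OF cEW]) (use ti in auto)
  have ie: "((\<lambda>u. exp u) has_integral (exp t - exp 0)) {0..t}"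
    by (rule fundamental_theorem_of_calculus[OF ti(1)])
       (auto intro!: derivative_eq_intros simp: has_real_derivative_iff_has_vector_derivative[symmetric])
  have ie2: "((\<lambda>u. exp u * A) has_integral ((exp t - 1) * A)) {0..t}"
    using has_integral_mult_left[OF ie, of A] by simp
  have "norm (integral {0..t} (\<lambda>u. exp u * W u)) \<le> integral {0..t} (\<lambda>u. exp u * A)"
  proof (rule Henstock_Kurzweil_Integration.integral_norm_bound_integral)
    show "(\<lambda>u. exp u * W u) integrable_on {0..t}" by (rule integrable_continuous_real[OF cEWt])
    show "(\<lambda>u. exp u * A) integrable_on {0..t}" using ie2 by blast
    show "norm (exp u * W u) \<le> exp u * A" if "u \<in> {0..t}" for u
      using Wb[of u] that ti by (auto simp: abs_mult)
  qed
  also have "\<dots> = (exp t - 1) * A" using ie2 by (rule integral_unique)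
  finally have Ib: "norm (integral {0..t} (\<lambda>u. exp u * W u)) \<le> (exp t - 1) * A" .
  have "exp t * V t = x - sqrt 2 * integral {0..t} (\<lambda>u. exp u * W u)"
    using Pt unfolding \<Phi>_def by simp
  then have Vt: "V t = exp (- t) * (x - sqrt 2 * integral {0..t} (\<lambda>u. exp u * W u))"
    by (simp add: exp_minus field_simps)
  have "\<bar>V t\<bar> \<le> exp (- t) * (\<bar>x\<bar> + sqrt 2 * ((exp t - 1) * A))"
  proof -
    have "\<bar>x - sqrt 2 * integral {0..t} (\<lambda>u. exp u * W u)\<bar> \<le> \<bar>x\<bar> + sqrt 2 * \<bar>integral {0..t} (\<lambda>u. exp u * W u)\<bar>"
      by (simp add: abs_mult order.trans[OF abs_triangle_ineq4])
    also have "\<dots> \<le> \<bar>x\<bar> + sqrt 2 * ((exp t - 1) * A)" using Ib by (simp add: mult_left_mono)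
    finally show ?thesis unfolding Vt abs_mult by (simp add: mult_left_mono)
  qed
  also have "\<dots> = exp (- t) * \<bar>x\<bar> + sqrt 2 * A * (1 - exp (- t))"
    by (simp add: algebra_simps exp_minus field_simps)
  also have "\<dots> \<le> \<bar>x\<bar> + sqrt 2 * A"
  proof -
    have "exp (- t) \<le> 1" using ti by simp
    then have "exp (- t) * \<bar>x\<bar> \<le> \<bar>x\<bar>" by (simp add: mult_left_le_one_le)
    moreover have "sqrt 2 * A * (1 - exp (- t)) \<le> sqrt 2 * A"
      using A0 by (simp add: mult_left_le)
    ultimately show ?thesis by linarith
  qed
  finally have Vb: "\<bar>V t\<bar> \<le> \<bar>x\<bar> + sqrt 2 * A" .
  have Gt: "G t = V t + sqrt 2 * W t" using eq[of t] ti unfolding V_def by simp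
  have "sqrt 2 \<le> 3 / 2" by (rule real_le_lsqrt) (auto simp: power2_eq_square)
  then have "sqrt 2 * \<bar>W t\<bar> \<le> 3 / 2 * A"
    using Wb[OF t] A0 by (intro mult_mono) auto
  moreover have "sqrt 2 * A \<le> 3 / 2 * A" using \<open>sqrt 2 \<le> 3/2\<close> A0 by (intro mult_right_mono) auto
  moreover have "\<bar>V t + sqrt 2 * W t\<bar> \<le> \<bar>V t\<bar> + sqrt 2 * \<bar>W t\<bar>"
    using abs_triangle_ineq[of "V t" "sqrt 2 * W t"] by (simp add: abs_mult)
  ultimately show ?thesis using Gt Vb by linarith
qed

lemma normal8:
  assumes "0 < \<sigma>"
  shows "has_bochner_integral lborel (\<lambda>x. normal_density 0 \<sigma> x * x ^ 8) (105 * \<sigma> ^ 8)"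
proof -
  have "has_bochner_integral lborel (\<lambda>x. normal_density 0 \<sigma> x * (x - 0) ^ (2 * 4)) (fact (2 * 4) / ((2 / \<sigma>\<^sup>2)^4 * fact 4))"
    by (rule normal_moment_even[OF assms])
  moreover have "fact (2 * 4) / ((2 / \<sigma>\<^sup>2)^4 * fact 4) = (105 * \<sigma> ^ 8 :: real)"
    using assms by (simp add: fact_numeral power_divide field_simps flip: power_mult)
  ultimately show ?thesis by simp
qed

lemma wiener_tail:
  assumes P: "prob_space M" and W: "wiener_process M W" and st: "0 \<le> s" "s \<le> t" and y: "0 < y"
  shows "measure M {\<omega>\<in>space M. y < \<bar>W t \<omega> - W s \<omega>\<bar>} \<le> 105 * (t - s) ^ 4 / y ^ 8"
proof (cases "s = t")
  case True
  then show ?thesis using y by simp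
next
  case False
  interpret prob_space M by (rule P)
  have st': "s < t" using st False by simp
  have meas: "W t \<in> borel_measurable M" "W s \<in> borel_measurable M"
    using W st unfolding wiener_process_def by auto
  let ?X = "\<lambda>\<omega>. W t \<omega> - W s \<omega>"
  have D: "distributed M lborel ?X (normal_density 0 (sqrt (t - s)))"
    using W st' st unfolding wiener_process_def by auto
  have sp: "0 < sqrt (t - s)" using st' by simp
  note N8 = normal8[OF sp]
  have int: "integrable M (\<lambda>\<omega>. (?X \<omega>) ^ 8)"
    using distributed_integrable[OF D, of "\<lambda>x. x ^ 8"] N8 by (auto simp: has_bochner_integral_iff)
  have EX: "(\<integral>\<omega>. (?X \<omega>) ^ 8 \<partial>M) = 105 * (t - s) ^ 4"
  proof -
    have "(\<integral>\<omega>. (?X \<omega>) ^ 8 \<partial>M) = (\<integral>x. normal_density 0 (sqrt (t - s)) x * x ^ 8 \<partial>lborel)"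
      using distributed_integral[OF D, of "\<lambda>x. x ^ 8"] by simp
    also have "\<dots> = 105 * sqrt (t - s) ^ 8" using N8 by (simp add: has_bochner_integral_iff)
    also have "sqrt (t - s) ^ 8 = (t - s) ^ 4"
    proof -
      have "sqrt (t - s) ^ 8 = (sqrt (t - s) ^ 2) ^ 4" by (simp flip: power_mult)
      then show ?thesis using st' by simp
    qed
    finally show ?thesis .
  qed
  have "measure M {\<omega>\<in>space M. y < \<bar>?X \<omega>\<bar>} \<le> measure M {\<omega>\<in>space M. y ^ 8 \<le> (?X \<omega>) ^ 8}"
  proof (rule finite_measure_mono)
    show "{\<omega>\<in>space M. y ^ 8 \<le> (?X \<omega>) ^ 8} \<in> sets M" using meas by measurable
    show "{\<omega>\<in>space M. y < \<bar>?X \<omega>\<bar>} \<subseteq> {\<omega>\<in>space M. y ^ 8 \<le> (?X \<omega>) ^ 8}"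
    proof safe
      fix \<omega> assume "y < \<bar>?X \<omega>\<bar>"
      then have "y ^ 8 \<le> \<bar>?X \<omega>\<bar> ^ 8" using y by (intro power_mono) auto
      then show "y ^ 8 \<le> (?X \<omega>) ^ 8" by (simp add: power_even_abs_numeral)
    qed
  qed
  also have "\<dots> \<le> (\<integral>\<omega>. (?X \<omega>) ^ 8 \<partial>M) / y ^ 8"
    by (rule integral_Markov_inequality_measure[OF int, where A="space M"]) (use y in auto)
  finally show ?thesis using EX by simp
qed

definition qc :: real where "qc = root 8 (1/4)"

lemma qc: "0 < qc" "qc < 1" "qc ^ 8 = 1/4"
  unfolding qc_def by (auto simp: real_root_lt_1_iff)

definition levev :: "'w measure \<Rightarrow> (nat \<Rightarrow> real \<Rightarrow> 'w \<Rightarrow> real) \<Rightarrow> nat set \<Rightarrow> real \<Rightarrow> real \<Rightarrow> 'w set" where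
  "levev M W I L A = (\<Union>i\<in>I. \<Union>n. \<Union>k\<in>{..<(2::nat)^n}.
     {\<omega>\<in>space M. A * qc ^ n < \<bar>W i ((real k + 1) * L / 2 ^ n) \<omega> - W i (real k * L / 2 ^ n) \<omega>\<bar>})"

lemma levev_S:
  assumes W: "wiener_process M (W i)" and L: "0 \<le> L"
  shows "{\<omega>\<in>space M. A * qc ^ n < \<bar>W i ((real k + 1) * L / 2 ^ n) \<omega> - W i (real k * L / 2 ^ n) \<omega>\<bar>} \<in> sets M"
proof -
  have [measurable]: "W i ((real k + 1) * L / 2 ^ n) \<in> borel_measurable M" "W i (real k * L / 2 ^ n) \<in> borel_measurable M"
    using W L unfolding wiener_process_def by auto
  show ?thesis by measurable
qed

lemma levev_sets:
  assumes W: "\<And>i. i \<in> I \<Longrightarrow> wiener_process M (W i)" and L: "0 \<le> L" and I: "countable I"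
  shows "levev M W I L A \<in> sets M"
  unfolding levev_def
  by (intro sets.countable_UN' I ballI sets.countable_UN sets.finite_UN) (auto intro: levev_S W L)

lemma pow_calc:
  assumes "0 < A"
  shows "105 * (L / 2 ^ n) ^ 4 / (A * qc ^ n) ^ 8 = 105 * L ^ 4 / A ^ 8 * (1/4) ^ n"
proof -
  have q: "(qc ^ n) ^ 8 = (1/4) ^ n" using qc(3) by (metis mult.commute power_mult)
  have 1: "(A * qc ^ n) ^ 8 = A ^ 8 * (1 / 4 ^ n)"
    by (simp only: power_mult_distrib q power_one_over)
  have "((2::real) ^ n) ^ 4 = (2 ^ 4) ^ n" by (metis mult.commute power_mult)
  also have "\<dots> = 4 ^ n * 4 ^ n" by (simp flip: power_mult_distrib)
  finally have 2: "(L / 2 ^ n) ^ 4 = L ^ 4 / (4 ^ n * 4 ^ n)" by (simp add: power_divide)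
  show ?thesis unfolding 1 2 power_one_over using assms by (simp add: field_simps)
qed

lemma levev_measure:
  assumes P: "prob_space M" and W: "\<And>i. i \<in> I \<Longrightarrow> wiener_process M (W i)"
    and L: "0 \<le> L" and A: "0 < A" and I: "finite I"
  shows "measure M (levev M W I L A) \<le> real (card I) * (210 * L ^ 4 / A ^ 8)"
proof -
  interpret prob_space M by (rule P)
  define c where "c = 105 * L ^ 4 / A ^ 8"
  have c0: "0 \<le> c" unfolding c_def using A by simp
  define S where "S = (\<lambda>i n (k::nat). {\<omega>\<in>space M. A * qc ^ n < \<bar>W i ((real k + 1) * L / 2 ^ n) \<omega> - W i (real k * L / 2 ^ n) \<omega>\<bar>})"
  have Ss: "S i n k \<in> sets M" if "i \<in> I" for i n k unfolding S_def by (rule levev_S) (auto intro: W that L)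
  have Sb: "measure M (S i n k) \<le> c * (1/4) ^ n" if "i \<in> I" for i n k
  proof -
    have y: "0 < A * qc ^ n" using A qc by simp
    have "measure M (S i n k) \<le> 105 * ((real k + 1) * L / 2 ^ n - real k * L / 2 ^ n) ^ 4 / (A * qc ^ n) ^ 8"
      unfolding S_def by (rule wiener_tail[OF P W[OF that] _ _ y]) (use L in \<open>auto simp: field_simps\<close>)
    also have "(real k + 1) * L / 2 ^ n - real k * L / 2 ^ n = L / 2 ^ n" by (simp add: field_simps)
    also have "105 * (L / 2 ^ n) ^ 4 / (A * qc ^ n) ^ 8 = c * (1/4) ^ n" unfolding c_def by (rule pow_calc[OF A])
    finally show ?thesis .
  qed
  define H where "H = (\<lambda>i n. \<Union>k\<in>{..<(2::nat)^n}. S i n k)"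
  have Hs: "H i n \<in> sets M" if "i \<in> I" for i n unfolding H_def using Ss[OF that] by auto
  have Hb: "measure M (H i n) \<le> c * (1/2) ^ n" if "i \<in> I" for i n
  proof -
    have "measure M (H i n) \<le> (\<Sum>k<(2::nat)^n. measure M (S i n k))"
      unfolding H_def by (rule finite_measure_subadditive_finite) (use Ss[OF that] in auto)
    also have "\<dots> \<le> (\<Sum>k<(2::nat)^n. c * (1/4) ^ n)" by (rule sum_mono) (rule Sb[OF that])
    also have "\<dots> = c * (2 ^ n * (1/4) ^ n)" by simp
    also have "2 ^ n * (1/4) ^ n = ((1/2)::real) ^ n" by (simp flip: power_mult_distrib)
    finally show ?thesis .
  qed
  have geo: "summable (\<lambda>n. c * (1/2::real) ^ n)" "(\<Sum>n. c * (1/2::real) ^ n) = 2 * c"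
    using suminf_geometric[of "1/2::real"] by (auto intro!: summable_mult summable_geometric simp: suminf_mult)
  define F where "F = (\<lambda>i. \<Union>n. H i n)"
  have Fs: "F i \<in> sets M" if "i \<in> I" for i unfolding F_def using Hs[OF that] by auto
  have Fb: "measure M (F i) \<le> 2 * c" if "i \<in> I" for i
  proof -
    have sH: "summable (\<lambda>n. measure M (H i n))"
      by (rule summable_comparison_test[OF _ geo(1)]) (use Hb[OF that] in auto)
    have "measure M (F i) \<le> (\<Sum>n. measure M (H i n))"
      unfolding F_def by (rule finite_measure_subadditive_countably) (use Hs[OF that] sH in auto)
    also have "\<dots> \<le> (\<Sum>n. c * (1/2) ^ n)" by (rule suminf_le[OF _ sH geo(1)]) (use Hb[OF that] in auto)
    finally show ?thesis using geo(2) by simp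
  qed
  have "levev M W I L A = (\<Union>i\<in>I. F i)" unfolding levev_def F_def H_def S_def by simp
  then have "measure M (levev M W I L A) \<le> (\<Sum>i\<in>I. measure M (F i))"
    using finite_measure_subadditive_finite[OF I, of F] Fs by auto
  also have "\<dots> \<le> (\<Sum>i\<in>I. 2 * c)" by (rule sum_mono) (rule Fb)
  also have "\<dots> = real (card I) * (210 * L ^ 4 / A ^ 8)" unfolding c_def by simp
  finally show ?thesis .
qed

definition gc :: real where "gc = root 16 (1/2)"

lemma gc: "0 < gc" "gc < 1" "1/2 < gc ^ 8"
proof -
  show g0: "0 < gc" "gc < 1" unfolding gc_def by (auto simp: real_root_lt_1_iff)
  have "gc ^ 16 = 1/2" unfolding gc_def by simp
  then have "(gc ^ 8) ^ 2 = 1/2" by (metis power_mult num_double numeral_times_numeral mult.commute numeral_Bit0 power_mult)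
  moreover have "(1/2::real) ^ 2 < 1/2" by (simp add: power2_eq_square)
  ultimately have "(1/2::real) ^ 2 < (gc ^ 8) ^ 2" by (simp only:)
  then show "1/2 < gc ^ 8" by (rule power_less_imp_less_base) (use g0 in simp)
qed

lemma bc_level:
  fixes W :: "nat \<Rightarrow> real \<Rightarrow> 'w \<Rightarrow> real"
  assumes P: "prob_space M" and W: "\<And>i. 1 \<le> i \<Longrightarrow> wiener_process M (W i)" and d: "1 \<le> d"
    and L0: "\<And>m. 0 \<le> L m" and LK: "\<And>m. L m \<le> K * sqrt 2 ^ m" and K: "0 \<le> K"
  shows "AE \<omega> in M. eventually (\<lambda>m. \<forall>i\<in>{d * 2 ^ m <.. d * 2 ^ (m + 1)}. \<forall>n k. k < (2::nat) ^ n \<longrightarrow>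
            \<bar>W i ((real k + 1) * L m / 2 ^ n) \<omega> - W i (real k * L m / 2 ^ n) \<omega>\<bar> \<le> (sqrt 2 * gc) ^ m * qc ^ n) sequentially"
proof -
  interpret prob_space M by (rule P)
  define A where "A = (\<lambda>m::nat. (sqrt 2 * gc) ^ m)"
  define I where "I = (\<lambda>m::nat. {d * 2 ^ m <.. d * 2 ^ (m + 1)})"
  define E where "E = (\<lambda>m. levev M W (I m) (L m) (A m))"
  have A0: "0 < A m" for m unfolding A_def using gc by simp
  have WI: "wiener_process M (W i)" if "i \<in> I m" for i m
    using that W unfolding I_def by (auto intro!: W)
  have Es: "E m \<in> sets M" for m unfolding E_def
    by (rule levev_sets) (auto intro: WI L0 simp: I_def)
  define ratio where "ratio = 1 / (2 * gc ^ 8)"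
  have r: "0 < ratio" "ratio < 1" unfolding ratio_def using gc by auto
  have Eb: "measure M (E m) \<le> 210 * real d * K ^ 4 * ratio ^ m" for m
  proof -
    have cI: "card (I m) = d * 2 ^ m" unfolding I_def by simp
    have "measure M (E m) \<le> real (card (I m)) * (210 * L m ^ 4 / A m ^ 8)"
      unfolding E_def by (rule levev_measure[OF P]) (auto intro: WI L0 A0 simp: I_def)
    also have "\<dots> \<le> real (d * 2 ^ m) * (210 * (K * sqrt 2 ^ m) ^ 4 / A m ^ 8)"
      unfolding cI
      by (intro mult_left_mono divide_right_mono power_mono LK L0) (use A0 in auto)
    also have "\<dots> = 210 * real d * K ^ 4 * ratio ^ m"
    proof -
      have s4: "(sqrt 2 ^ m) ^ 4 = (4::real) ^ m"
      proof -
        have "(sqrt 2 ^ m) ^ 4 = ((sqrt 2) ^ 4) ^ m" by (metis mult.commute power_mult)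
        also have "(sqrt 2::real) ^ 4 = 4" by (metis power_mult real_sqrt_pow2 num_double numeral_times_numeral power2_eq_square zero_le_numeral numeral_Bit0 mult_2)
        finally show ?thesis .
      qed
      have a8: "A m ^ 8 = (16 * gc ^ 8) ^ m"
      proof -
        have "A m ^ 8 = ((sqrt 2 * gc) ^ 8) ^ m" unfolding A_def by (metis mult.commute power_mult)
        also have "(sqrt 2 * gc) ^ 8 = 16 * gc ^ 8"
        proof -
          have "(sqrt 2::real) ^ 8 = (sqrt 2) ^ (2 * 4)" by simp
          also have "\<dots> = ((sqrt 2) ^ 2) ^ 4" by (rule power_mult)
          finally have "(sqrt 2::real) ^ 8 = 16" by simp
          then show ?thesis by (simp add: power_mult_distrib)
        qed
        finally show ?thesis .
      qed
      have g8: "0 < gc ^ 8" using gc by simp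
      have "real (d * 2 ^ m) * (210 * (K * sqrt 2 ^ m) ^ 4 / A m ^ 8)
          = 210 * real d * K ^ 4 * ((2 ^ m * 4 ^ m) / (16 * gc ^ 8) ^ m)"
      proof -
        have h: "x * y * (210 * (k * z) / b) = 210 * x * k * ((y * z) / b)" for x y k z b :: real
          by (simp add: times_divide_eq_right mult_ac)
        show ?thesis unfolding a8 power_mult_distrib s4 of_nat_mult of_nat_power by (simp only: h) simp
      qed
      also have "(2 ^ m * 4 ^ m) / (16 * gc ^ 8) ^ m = ratio ^ m"
      proof -
        have "(2 ^ m * 4 ^ m) / (16 * gc ^ 8) ^ m = ((2 * 4) / (16 * gc ^ 8)) ^ m"
          by (simp only: power_divide power_mult_distrib)
        also have "(2 * 4) / (16 * gc ^ 8) = ratio" unfolding ratio_def using g8 by (simp add: field_simps)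
        finally show ?thesis .
      qed
      finally show ?thesis .
    qed
    finally show ?thesis .
  qed
  have sm: "summable (\<lambda>m. measure M (E m))"
    by (rule summable_comparison_test[OF _ summable_mult[OF summable_geometric[of ratio]], of _ "210 * real d * K ^ 4"])
       (use r Eb in auto)
  have "AE \<omega> in M. eventually (\<lambda>m. \<omega> \<in> space M - E m) sequentially"
    by (rule borel_cantelli_AE1) (use Es sm in \<open>auto simp: emeasure_eq_measure\<close>)
  then show ?thesis
  proof (rule AE_mp, intro AE_I2 impI)
    fix \<omega> assume "eventually (\<lambda>m. \<omega> \<in> space M - E m) sequentially"
    then show "eventually (\<lambda>m. \<forall>i\<in>{d * 2 ^ m <.. d * 2 ^ (m + 1)}. \<forall>n k. k < (2::nat) ^ n \<longrightarrow>
            \<bar>W i ((real k + 1) * L m / 2 ^ n) \<omega> - W i (real k * L m / 2 ^ n) \<omega>\<bar> \<le> (sqrt 2 * gc) ^ m * qc ^ n) sequentially"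
      by (rule eventually_mono) (auto simp: E_def levev_def I_def A_def not_less)
  qed
qed

lemma C0_sum:
  fixes f :: "nat \<Rightarrow> real \<Rightarrow> 'a::real_normed_vector"
  assumes "finite I" "\<And>i. i \<in> I \<Longrightarrow> f i \<in> C0"
  shows "(\<lambda>s. \<Sum>i\<in>I. c i *\<^sub>R f i s) \<in> C0"
  using assms unfolding C0_def by (auto intro!: continuous_intros)

lemma tupledist_nonneg: "0 \<le> tupledist \<Gamma> \<Delta>"
  unfolding tupledist_def by (rule Max_ge) auto

lemma tupledist_le:
  assumes "\<And>k s. k < length \<Gamma> \<Longrightarrow> s \<in> {0..1} \<Longrightarrow> norm ((\<Gamma> ! k) s - (\<Delta> ! k) s) \<le> c" "0 \<le> c"
  shows "tupledist \<Gamma> \<Delta> \<le> c"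
proof -
  have fin: "finite {supdist (\<Gamma> ! k) (\<Delta> ! k) | k. k < length \<Gamma>}" by simp
  have "supdist (\<Gamma> ! k) (\<Delta> ! k) \<le> c" if "k < length \<Gamma>" for k
    unfolding supdist_def by (rule cSUP_least) (use assms that in auto)
  then show ?thesis unfolding tupledist_def using fin assms(2) by (auto simp: Max_le_iff)
qed

lemma F_comp_meas:
  fixes \<Phi> :: "(nat \<times> nat \<Rightarrow> real) \<Rightarrow> (real \<Rightarrow> 'a::real_normed_vector) list"
  assumes F: "bcont_test m F"
    and \<Phi>C: "\<And>v. \<Phi> v \<in> C0_tuples m"
    and \<Phi>cont: "\<And>u v. (\<And>j. (\<lambda>k. u k j) \<longlonglongrightarrow> v j) \<Longrightarrow> (\<lambda>k. tupledist (\<Phi> v) (\<Phi> (u k))) \<longlonglongrightarrow> 0"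
    and V: "\<And>j. (\<lambda>\<omega>. V \<omega> j) \<in> borel_measurable M"
  shows "(\<lambda>\<omega>. F (\<Phi> (V \<omega>))) \<in> borel_measurable M"
proof -
  have Vm: "V \<in> borel_measurable M" by (rule measurable_coordinatewise_then_product) (rule V)
  have cont: "continuous_on UNIV (\<lambda>v. F (\<Phi> v))"
  proof (rule continuous_on_sequentiallyI)
    fix u :: "nat \<Rightarrow> nat \<times> nat \<Rightarrow> real" and a assume ua: "u \<longlonglongrightarrow> a"
    have cj: "(\<lambda>k. u k j) \<longlonglongrightarrow> a j" for j
      by (rule continuous_on_tendsto_compose[OF continuous_on_product_coordinates ua]) auto
    have td: "(\<lambda>k. tupledist (\<Phi> a) (\<Phi> (u k))) \<longlonglongrightarrow> 0" by (rule \<Phi>cont[OF cj])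
    show "(\<lambda>n. F (\<Phi> (u n))) \<longlonglongrightarrow> F (\<Phi> a)"
    proof (rule LIMSEQ_I)
      fix r :: real assume r: "0 < r"
      obtain \<delta> where \<delta>: "\<delta> > 0" "\<And>\<Delta>. \<Delta> \<in> C0_tuples m \<Longrightarrow> tupledist (\<Phi> a) \<Delta> < \<delta> \<Longrightarrow> \<bar>F \<Delta> - F (\<Phi> a)\<bar> < r"
        using F \<Phi>C[of a] r unfolding bcont_test_def by blast
      obtain N where N: "\<And>n. n \<ge> N \<Longrightarrow> norm (tupledist (\<Phi> a) (\<Phi> (u n)) - 0) < \<delta>"
        using LIMSEQ_D[OF td \<delta>(1)] by blast
      show "\<exists>no. \<forall>n\<ge>no. norm (F (\<Phi> (u n)) - F (\<Phi> a)) < r"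
      proof (intro exI[of _ N] allI impI)
        fix n assume "N \<le> n"
        then have "tupledist (\<Phi> a) (\<Phi> (u n)) < \<delta>" using N[of n] tupledist_nonneg[of "\<Phi> a" "\<Phi> (u n)"] by simp
        then show "norm (F (\<Phi> (u n)) - F (\<Phi> a)) < r" using \<delta>(2)[OF \<Phi>C] by simp
      qed
    qed
  qed
  have "(\<lambda>v. F (\<Phi> v)) \<in> borel_measurable borel" by (rule borel_measurable_continuous_onI[OF cont])
  then show ?thesis using measurable_compose[OF Vm] by auto
qed

definition lv :: "nat \<Rightarrow> nat \<Rightarrow> nat" where
  "lv d i = haar_level ((i - 1) div d + 1)"

lemma lv_eq:
  assumes "1 \<le> d" "d * 2 ^ m < i" "i \<le> d * 2 ^ (m + 1)"
  shows "lv d i = m"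
  unfolding lv_def using level_r[OF assms] by (rule haar_level_eq)

lemma lv_in:
  assumes d: "1 \<le> d" and i: "d < i"
  shows "d * 2 ^ (lv d i) < i \<and> i \<le> d * 2 ^ (lv d i + 1)"
proof -
  define r where "r = (i - 1) div d + 1"
  have "d \<le> i - 1" using i by simp
  then have "1 \<le> (i - 1) div d" using d by (metis div_le_mono div_self not_one_le_zero)
  then have "2 \<le> r" unfolding r_def by simp
  then obtain m where m: "2 ^ m < r" "r \<le> 2 ^ (m + 1)" using haar_level_ex by blast
  have lvm: "lv d i = m" unfolding lv_def r_def[symmetric] by (rule haar_level_eq[OF m])
  have "2 ^ m \<le> (i - 1) div d" using m(1) unfolding r_def by simp
  then have "d * 2 ^ m \<le> d * ((i - 1) div d)" by simp
  also have "\<dots> \<le> i - 1" by simp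
  finally have 1: "d * 2 ^ m < i" using i by simp
  have "(i - 1) div d < 2 ^ (m + 1)" using m(2) unfolding r_def by simp
  then have "i - 1 < d * 2 ^ (m + 1)" using d by (simp add: div_less_iff_less_mult mult.commute)
  then have 2: "i \<le> d * 2 ^ (m + 1)" by simp
  show ?thesis using 1 2 lvm by simp
qed

lemma det_unif:
  fixes g :: "nat \<Rightarrow> real \<Rightarrow> real" and e :: "nat \<Rightarrow> 'a::euclidean_space"
  assumes d: "1 \<le> d" and en: "\<And>j. 1 \<le> j \<Longrightarrow> j \<le> d \<Longrightarrow> norm (e j) = 1"
    and bnd: "\<And>T::nat. \<exists>m0. \<forall>m\<ge>m0. \<forall>i\<in>{d * 2 ^ m <.. d * 2 ^ (m + 1)}. \<forall>t\<in>{0..real T}. \<bar>g i t\<bar> \<le> b m"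
    and b0: "\<And>m. 0 \<le> b m"
    and sm: "summable (\<lambda>m. real d * (b m * (2 powr (real m / 2) / 2 ^ (m + 1))))"
  shows "\<And>t s. 0 \<le> t \<Longrightarrow> (\<lambda>n. \<Sum>i\<in>{1..n}. g i t *\<^sub>R schauder_S d e i s) \<longlonglongrightarrow> lim (\<lambda>n. \<Sum>i\<in>{1..n}. g i t *\<^sub>R schauder_S d e i s)"
    and "\<And>(T::nat) \<epsilon>. 0 < \<epsilon> \<Longrightarrow> \<exists>N. \<forall>n\<ge>N. \<forall>t\<in>{0..real T}. \<forall>s.
          norm ((\<Sum>i\<in>{1..n}. g i t *\<^sub>R schauder_S d e i s) - lim (\<lambda>n. \<Sum>i\<in>{1..n}. g i t *\<^sub>R schauder_S d e i s)) \<le> \<epsilon>"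
proof -
  define P where "P = (\<lambda>n t s. \<Sum>i\<in>{1..n}. g i t *\<^sub>R schauder_S d e i s)"
  define c where "c = (\<lambda>m. real d * (b m * (2 powr (real m / 2) / 2 ^ (m + 1))))"
  have c0: "0 \<le> c m" for m unfolding c_def using b0 by simp
  define \<tau> where "\<tau> = (\<lambda>j. \<Sum>k. c (k + j))"
  have \<tau>0: "\<tau> \<longlonglongrightarrow> 0" unfolding \<tau>_def c_def by (rule suminf_exist_split2[OF sm])
  have smj: "summable (\<lambda>k. c (k + j))" for j using sm unfolding c_def by (rule summable_ignore_initial_segment)
  have tail: "norm (P n2 t s - P n1 t s) \<le> \<tau> j"
    if T: "\<forall>m\<ge>j. \<forall>i\<in>{d * 2 ^ m <.. d * 2 ^ (m + 1)}. \<bar>g i t\<bar> \<le> b m"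
    and n: "d * 2 ^ j \<le> n1" "n1 \<le> n2" for n1 n2 t s j
  proof -
    define S where "S = {n1<..n2}"
    have n1d: "d \<le> n1" using n d by (metis le_trans mult.right_neutral mult_le_mono2 one_le_numeral one_le_power)
    have split: "{1..n2} = {1..n1} \<union> S" unfolding S_def using n n1d d by auto
    have "P n2 t s = P n1 t s + (\<Sum>i\<in>S. g i t *\<^sub>R schauder_S d e i s)"
      unfolding P_def split by (rule sum.union_disjoint) (auto simp: S_def)
    then have "P n2 t s - P n1 t s = (\<Sum>i\<in>S. g i t *\<^sub>R schauder_S d e i s)" by simp
    also have "\<dots> = (\<Sum>m\<in>lv d ` S. \<Sum>i\<in>{i. i \<in> S \<and> lv d i = m}. g i t *\<^sub>R schauder_S d e i s)"
      by (rule sum.image_gen) (simp add: S_def)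
    finally have eq: "P n2 t s - P n1 t s = (\<Sum>m\<in>lv d ` S. \<Sum>i\<in>{i. i \<in> S \<and> lv d i = m}. g i t *\<^sub>R schauder_S d e i s)" .
    have inlev: "d * 2 ^ (lv d i) < i \<and> i \<le> d * 2 ^ (lv d i + 1)" if "i \<in> S" for i
      by (rule lv_in[OF d]) (use that n1d in \<open>auto simp: S_def\<close>)
    have lvj: "j \<le> lv d i" if "i \<in> S" for i
    proof -
      have a: "n1 < i" using that unfolding S_def by simp
      have b: "i \<le> d * 2 ^ (lv d i + 1)" using inlev[OF that] by blast
      have "d * 2 ^ j < d * 2 ^ (lv d i + 1)" using a b n(1) by linarith
      then have "(2::nat) ^ j < 2 ^ (lv d i + 1)" using d by (simp add: mult_less_cancel1)
      then have "j < lv d i + 1" using power_strict_increasing_iff[of "2::nat" j "lv d i + 1"] by simp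
      then show ?thesis by simp
    qed
    have "norm (P n2 t s - P n1 t s) \<le> (\<Sum>m\<in>lv d ` S. norm (\<Sum>i\<in>{i. i \<in> S \<and> lv d i = m}. g i t *\<^sub>R schauder_S d e i s))"
      unfolding eq by (rule norm_sum)
    also have "\<dots> \<le> (\<Sum>m\<in>lv d ` S. c m)"
    proof (rule sum_mono)
      fix m assume m: "m \<in> lv d ` S"
      have mj: "j \<le> m" using m lvj by auto
      show "norm (\<Sum>i\<in>{i. i \<in> S \<and> lv d i = m}. g i t *\<^sub>R schauder_S d e i s) \<le> c m"
        unfolding c_def mult.assoc[symmetric]
      proof (rule level_sum_bound[OF d en])
        show "finite {i. i \<in> S \<and> lv d i = m}" by (simp add: S_def)
        show "{i. i \<in> S \<and> lv d i = m} \<subseteq> {d * 2 ^ m<..d * 2 ^ (m + 1)}" using inlev by auto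
        show "\<bar>g i t\<bar> \<le> b m" if "i \<in> {i. i \<in> S \<and> lv d i = m}" for i
          using T mj inlev that by auto
        show "0 \<le> b m" by (rule b0)
      qed auto
    qed
    also have "\<dots> \<le> \<tau> j"
    proof -
      have fin: "finite (lv d ` S)" by (simp add: S_def)
      have ge: "\<forall>m\<in>lv d ` S. j \<le> m" using lvj by auto
      have inj: "inj_on (\<lambda>m. m - j) (lv d ` S)"
      proof (rule inj_onI)
        fix x y assume "x \<in> lv d ` S" "y \<in> lv d ` S" "x - j = y - j"
        then show "x = y" using ge by (metis le_add_diff_inverse)
      qed
      have "(\<Sum>m\<in>lv d ` S. c m) = (\<Sum>k\<in>(\<lambda>m. m - j) ` lv d ` S. c (k + j))"
        by (subst sum.reindex[OF inj]) (use ge in \<open>auto intro!: sum.cong\<close>)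
      also have "\<dots> \<le> \<tau> j" unfolding \<tau>_def
        by (rule sum_le_suminf[OF smj]) (use fin c0 in auto)
      finally show ?thesis .
    qed
    finally show ?thesis .
  qed
  have unif: "\<exists>N. \<forall>n1\<ge>N. \<forall>n2\<ge>n1. \<forall>t\<in>{0..real T}. \<forall>s. norm (P n2 t s - P n1 t s) \<le> \<epsilon>" if eps: "0 < \<epsilon>" for T :: nat and \<epsilon>
  proof -
    obtain m0 where m0: "\<forall>m\<ge>m0. \<forall>i\<in>{d * 2 ^ m <.. d * 2 ^ (m + 1)}. \<forall>t\<in>{0..real T}. \<bar>g i t\<bar> \<le> b m"
      using bnd by blast
    obtain j0 where j0: "\<And>j. j \<ge> j0 \<Longrightarrow> norm (\<tau> j - 0) < \<epsilon>" using LIMSEQ_D[OF \<tau>0 eps] by blast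
    define j where "j = max j0 m0"
    have \<tau>j: "\<tau> j \<le> \<epsilon>" using j0[of j] unfolding j_def by auto
    show ?thesis
    proof (intro exI[of _ "d * 2 ^ j"] allI impI ballI)
      fix n1 n2 t s assume h: "d * 2 ^ j \<le> n1" "n1 \<le> n2" "t \<in> {0..real T}"
      have "\<forall>m\<ge>j. \<forall>i\<in>{d * 2 ^ m <.. d * 2 ^ (m + 1)}. \<bar>g i t\<bar> \<le> b m"
        using m0 h(3) unfolding j_def by auto
      then show "norm (P n2 t s - P n1 t s) \<le> \<epsilon>" using tail[OF _ h(1,2)] \<tau>j by (meson order_trans)
    qed
  qed
  have conv: "(\<lambda>n. P n t s) \<longlonglongrightarrow> lim (\<lambda>n. P n t s)" if t: "0 \<le> t" for t s
  proof -
    define T where "T = nat \<lceil>t\<rceil>"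
    have tT: "t \<in> {0..real T}" using t unfolding T_def by (simp add: real_nat_ceiling_ge)
    have "Cauchy (\<lambda>n. P n t s)"
    proof (rule CauchyI)
      fix \<epsilon> :: real assume "0 < \<epsilon>"
      then have "0 < \<epsilon> / 2" by simp
      from unif[OF this, of T] obtain N where N: "\<forall>n1\<ge>N. \<forall>n2\<ge>n1. \<forall>t\<in>{0..real T}. \<forall>s. norm (P n2 t s - P n1 t s) \<le> \<epsilon> / 2"
        by blast
      show "\<exists>M. \<forall>m\<ge>M. \<forall>n\<ge>M. norm (P m t s - P n t s) < \<epsilon>"
      proof (intro exI[of _ N] allI impI)
        fix m n assume "N \<le> m" "N \<le> n"
        then have "norm (P m t s - P n t s) \<le> \<epsilon> / 2"
          using N tT by (cases "m \<le> n") (auto simp: norm_minus_commute)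
        then show "norm (P m t s - P n t s) < \<epsilon>" using \<open>0 < \<epsilon>\<close> by simp
      qed
    qed
    then show ?thesis by (simp add: Cauchy_convergent_iff convergent_LIMSEQ_iff)
  qed
  then show "\<And>t s. 0 \<le> t \<Longrightarrow> (\<lambda>n. \<Sum>i\<in>{1..n}. g i t *\<^sub>R schauder_S d e i s) \<longlonglongrightarrow> lim (\<lambda>n. \<Sum>i\<in>{1..n}. g i t *\<^sub>R schauder_S d e i s)"
    unfolding P_def by blast
  show "\<exists>N. \<forall>n\<ge>N. \<forall>t\<in>{0..real T}. \<forall>s.
          norm ((\<Sum>i\<in>{1..n}. g i t *\<^sub>R schauder_S d e i s) - lim (\<lambda>n. \<Sum>i\<in>{1..n}. g i t *\<^sub>R schauder_S d e i s)) \<le> \<epsilon>"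
    if "0 < \<epsilon>" for T :: nat and \<epsilon>
  proof -
    from unif[OF that, of T] obtain N where N: "\<forall>n1\<ge>N. \<forall>n2\<ge>n1. \<forall>t\<in>{0..real T}. \<forall>s. norm (P n2 t s - P n1 t s) \<le> \<epsilon>"
      by blast
    show ?thesis
    proof (intro exI[of _ N] allI impI ballI)
      fix n t s assume n: "N \<le> n" and t: "t \<in> {0..real T}"
      have "(\<lambda>n2. P n2 t s - P n t s) \<longlonglongrightarrow> lim (\<lambda>n. P n t s) - P n t s"
        by (intro tendsto_intros conv) (use t in auto)
      then have "(\<lambda>n2. norm (P n2 t s - P n t s)) \<longlonglongrightarrow> norm (lim (\<lambda>n. P n t s) - P n t s)"
        by (rule tendsto_norm)
      then have "norm (lim (\<lambda>n. P n t s) - P n t s) \<le> \<epsilon>"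
        by (rule LIMSEQ_le_const2) (use N n t in \<open>auto intro!: exI[of _ n]\<close>)
      then show "norm ((\<Sum>i\<in>{1..n}. g i t *\<^sub>R schauder_S d e i s) - lim (\<lambda>n. \<Sum>i\<in>{1..n}. g i t *\<^sub>R schauder_S d e i s)) \<le> \<epsilon>"
        by (simp add: norm_minus_commute P_def)
    qed
  qed
qed

theorem proposition2p5:
  fixes M :: "'w measure"
    and d :: nat
    and e :: "nat \<Rightarrow> 'a::euclidean_space"
    and lam :: "nat \<Rightarrow> real"
    and W G :: "nat \<Rightarrow> real \<Rightarrow> 'w \<Rightarrow> real"
    and x :: "nat \<Rightarrow> real"
  assumes "prob_space M"
    and dim: "DIM('a) = d"
    and basis: "bij_betw e {1..d} Basis"
    and lam_pos: "0 < lam 1"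
    and lam_mono: "\<And>i j. 1 \<le> i \<Longrightarrow> i \<le> j \<Longrightarrow> lam i \<le> lam j"
    and wiener: "\<And>i. 1 \<le> i \<Longrightarrow> wiener_process M (W i)"
    and indep: "prob_space.indep_vars M (\<lambda>_. Pi\<^sub>M {0..} (\<lambda>_. borel))
                  (\<lambda>i \<omega>. restrict (\<lambda>t. W i t \<omega>) {0..}) {1..}"
    and ou: "\<And>i. 1 \<le> i \<Longrightarrow> ou_process M (W i) (x i) (G i)"
    and sum1: "summable (\<lambda>m::nat. 2 powr (- real m / 2) * lam (d * 2 ^ m) * sqrt (real m))"
    and sum2: "summable (\<lambda>m::nat. 2 powr (- real m / 2)
                 * (MAX i\<in>{d * 2 ^ m <.. d * 2 ^ (m + 1)}. \<bar>x i\<bar>) * lam (d * 2 ^ m))"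
  shows "\<exists>Y :: real \<Rightarrow> 'w \<Rightarrow> real \<Rightarrow> 'a.
           \<comment> \<open>(a) Y is a C_0-valued process with continuous paths ...\<close>
           (\<forall>t\<ge>0. \<forall>s. (\<lambda>\<omega>. Y t \<omega> s) \<in> borel_measurable M) \<and>
           (\<forall>\<omega>\<in>space M. \<forall>t\<ge>0. Y t \<omega> \<in> C0) \<and>
           (\<forall>\<omega>\<in>space M. \<forall>t0\<ge>0. uniform_limit {0..1} (\<lambda>t. Y t \<omega>) (Y t0 \<omega>) (at t0 within {0..})) \<and>
           \<comment> \<open>... which is a modification of X_t = sum_i G_i(lam_i t) S_i (series convergent a.s. in C_0)\<close>
           (\<forall>t\<ge>0. AE \<omega> in M. uniform_limit {0..1} (\<lambda>n. partial_X d e lam G n t \<omega>) (Y t \<omega>) sequentially) \<and>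
           \<comment> \<open>(b) convergence of finite dimensional distributions\<close>
           (\<forall>ts :: real list. sorted_wrt (<) ts \<longrightarrow> (\<forall>t\<in>set ts. 0 \<le> t) \<longrightarrow>
              weak_conv_C0_tuples M (length ts)
                (\<lambda>n \<omega>. map (\<lambda>t. partial_X d e lam G n t \<omega>) ts)
                (\<lambda>\<omega>. map (\<lambda>t. Y t \<omega>) ts))"
proof -
  interpret prob_space M by fact
  have d1: "1 \<le> d" using dim DIM_positive[where 'a='a] by linarith
  have en: "norm (e j) = 1" if "1 \<le> j" "j \<le> d" for j
    using bij_betwE[OF basis] that by auto
  have lampos: "0 < lam i" if "1 \<le> i" for i using lam_mono[OF order_refl that] lam_pos by simp
  define \<Lambda> where "\<Lambda> = (\<lambda>m::nat. lam (d * 2 ^ (m + 1)))"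
  have \<Lambda>0: "0 < \<Lambda> m" for m unfolding \<Lambda>_def by (rule lampos) (use d1 in simp)
  obtain K where K: "0 \<le> K" "\<And>m. \<Lambda> m \<le> K * sqrt 2 ^ m"
  proof -
    define t where "t = (\<lambda>m::nat. 2 powr (- real m / 2) * lam (d * 2 ^ m) * sqrt (real m))"
    have "t \<longlonglongrightarrow> 0" unfolding t_def by (rule summable_LIMSEQ_zero[OF sum1])
    then have "bounded (range t)" by (rule convergent_imp_bounded)
    then obtain B where B: "\<And>m. \<bar>t m\<bar> \<le> B" by (auto simp: bounded_iff)
    have B0: "0 \<le> B" using B[of 0] by simp
    have lb: "lam (d * 2 ^ m) \<le> B * sqrt 2 ^ m" if "1 \<le> m" for m
    proof -
      have pos: "0 < lam (d * 2 ^ m)" by (rule lampos) (use d1 in simp)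
      have "lam (d * 2 ^ m) \<le> lam (d * 2 ^ m) * sqrt (real m)" using that pos by simp
      also have "\<dots> = t m * sqrt 2 ^ m" unfolding t_def pw2 by simp
      also have "\<dots> \<le> B * sqrt 2 ^ m" using B[of m] by (intro mult_right_mono) auto
      finally show ?thesis .
    qed
    show ?thesis
    proof (rule that[of "B * sqrt 2"])
      show "0 \<le> B * sqrt 2" using B0 by simp
      fix m
      have "\<Lambda> m \<le> B * sqrt 2 ^ (m + 1)" unfolding \<Lambda>_def by (rule lb) simp
      then show "\<Lambda> m \<le> B * sqrt 2 * sqrt 2 ^ m" by (simp add: mult_ac)
    qed
  qed
  define Xm where "Xm = (\<lambda>m::nat. MAX i\<in>{d * 2 ^ m <.. d * 2 ^ (m + 1)}. \<bar>x i\<bar>)"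
  have Xm: "\<bar>x i\<bar> \<le> Xm m" if "i \<in> {d * 2 ^ m <.. d * 2 ^ (m + 1)}" for i m
    unfolding Xm_def by (rule Max_ge) (use that in auto)
  have Xm0: "0 \<le> Xm m" for m
  proof -
    have "d * 2 ^ (m + 1) \<in> {d * 2 ^ m <.. d * 2 ^ (m + 1)}" using d1 by simp
    then show ?thesis using Xm[of "d * 2 ^ (m + 1)" m] by linarith
  qed
  have smX: "summable (\<lambda>m. Xm m * (1 / sqrt 2 ^ m))"
  proof (rule summable_comparison_test[OF _ summable_mult[OF sum2, of "1 / lam 1"]])
    show "\<exists>N. \<forall>n\<ge>N. norm (Xm n * (1 / sqrt 2 ^ n)) \<le> 1 / lam 1 * (2 powr (- real n / 2) * (MAX i\<in>{d * 2 ^ n<..d * 2 ^ (n + 1)}. \<bar>x i\<bar>) * lam (d * 2 ^ n))"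
    proof (intro exI[of _ 0] allI impI)
      fix n :: nat
      have dd: "1 \<le> d * 2 ^ n" using d1 by (metis mult_le_mono nat_mult_1 one_le_power one_le_numeral)
      have l: "lam 1 \<le> lam (d * 2 ^ n)" by (rule lam_mono[OF _ dd]) simp
      have "Xm n * (1 / sqrt 2 ^ n) = 1 / lam 1 * (1 / sqrt 2 ^ n * Xm n * lam 1)" using lam_pos by simp
      also have "\<dots> \<le> 1 / lam 1 * (1 / sqrt 2 ^ n * Xm n * lam (d * 2 ^ n))"
        using lam_pos Xm0[of n] l by (intro mult_left_mono) auto
      finally show "norm (Xm n * (1 / sqrt 2 ^ n)) \<le> 1 / lam 1 * (2 powr (- real n / 2) * (MAX i\<in>{d * 2 ^ n<..d * 2 ^ (n + 1)}. \<bar>x i\<bar>) * lam (d * 2 ^ n))"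
        using Xm0[of n] unfolding pw2 Xm_def by simp
    qed
  qed
  define A where "A = (\<lambda>m::nat. (sqrt 2 * gc) ^ m)"
  define b where "b = (\<lambda>m. Xm m + 3 * (A m / (1 - qc)))"
  have b0: "0 \<le> b m" for m unfolding b_def A_def using Xm0[of m] gc qc by simp
  have smb: "summable (\<lambda>m. real d * (b m * (2 powr (real m / 2) / 2 ^ (m + 1))))"
  proof -
    have "A m * (1 / sqrt 2 ^ m) = gc ^ m" for m unfolding A_def by (simp add: power_mult_distrib)
    then have sA: "summable (\<lambda>m. A m * (1 / sqrt 2 ^ m))" using gc by (simp add: summable_geometric)
    have "summable (\<lambda>m. real d * (1/2) * (Xm m * (1 / sqrt 2 ^ m) + 3 / (1 - qc) * (A m * (1 / sqrt 2 ^ m))))"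
      by (intro summable_mult summable_add smX sA)
    then show ?thesis unfolding pw3 b_def by (simp add: algebra_simps)
  qed
  have LK: "\<Lambda> m * real T \<le> (K * real T) * sqrt 2 ^ m" for m T
    using mult_right_mono[OF K(2)[of m], of "real T"] by (simp add: mult_ac)
  have aeBC: "AE \<omega> in M. \<forall>T::nat. eventually (\<lambda>m. \<forall>i\<in>{d * 2 ^ m <.. d * 2 ^ (m + 1)}. \<forall>n k. k < (2::nat) ^ n \<longrightarrow>
            \<bar>W i ((real k + 1) * (\<Lambda> m * real T) / 2 ^ n) \<omega> - W i (real k * (\<Lambda> m * real T) / 2 ^ n) \<omega>\<bar> \<le> A m * qc ^ n) sequentially"
    unfolding AE_all_countable A_def
  proof
    fix T :: nat
    show "AE \<omega> in M. eventually (\<lambda>m. \<forall>i\<in>{d * 2 ^ m <.. d * 2 ^ (m + 1)}. \<forall>n k. k < (2::nat) ^ n \<longrightarrow>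
            \<bar>W i ((real k + 1) * (\<Lambda> m * real T) / 2 ^ n) \<omega> - W i (real k * (\<Lambda> m * real T) / 2 ^ n) \<omega>\<bar> \<le> (sqrt 2 * gc) ^ m * qc ^ n) sequentially"
    proof (rule bc_level[OF \<open>prob_space M\<close> wiener d1 _ LK])
      show "0 \<le> \<Lambda> m * real T" for m using \<Lambda>0[of m] by simp
      show "0 \<le> K * real T" using K by simp
    qed
  qed
  have aeW: "AE \<omega> in M. \<forall>i. 1 \<le> i \<longrightarrow> continuous_on {0..} (\<lambda>t. W i t \<omega>)"
    unfolding AE_all_countable
  proof
    fix i :: nat
    show "AE \<omega> in M. 1 \<le> i \<longrightarrow> continuous_on {0..} (\<lambda>t. W i t \<omega>)"
    proof (cases "1 \<le> i")
      case True
      then show ?thesis using wiener[OF True] unfolding wiener_process_def by auto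
    qed simp
  qed
  have aeG: "AE \<omega> in M. \<forall>i. 1 \<le> i \<longrightarrow> continuous_on {0..} (\<lambda>t. G i t \<omega>) \<and>
        (\<forall>t\<ge>0. G i t \<omega> = x i - integral {0..t} (\<lambda>u. G i u \<omega>) + sqrt 2 * W i t \<omega>)"
    unfolding AE_all_countable
  proof
    fix i :: nat
    show "AE \<omega> in M. 1 \<le> i \<longrightarrow> continuous_on {0..} (\<lambda>t. G i t \<omega>) \<and>
        (\<forall>t\<ge>0. G i t \<omega> = x i - integral {0..t} (\<lambda>u. G i u \<omega>) + sqrt 2 * W i t \<omega>)"
    proof (cases "1 \<le> i")
      case True
      then show ?thesis using ou[OF True] unfolding ou_process_def by auto
    qed simp
  qed
  define Q where "Q = (\<lambda>\<omega>. (\<forall>T::nat. eventually (\<lambda>m. \<forall>i\<in>{d * 2 ^ m <.. d * 2 ^ (m + 1)}. \<forall>n k. k < (2::nat) ^ n \<longrightarrow>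
            \<bar>W i ((real k + 1) * (\<Lambda> m * real T) / 2 ^ n) \<omega> - W i (real k * (\<Lambda> m * real T) / 2 ^ n) \<omega>\<bar> \<le> A m * qc ^ n) sequentially)
     \<and> (\<forall>i. 1 \<le> i \<longrightarrow> continuous_on {0..} (\<lambda>t. W i t \<omega>))
     \<and> (\<forall>i. 1 \<le> i \<longrightarrow> continuous_on {0..} (\<lambda>t. G i t \<omega>) \<and>
        (\<forall>t\<ge>0. G i t \<omega> = x i - integral {0..t} (\<lambda>u. G i u \<omega>) + sqrt 2 * W i t \<omega>)))"
  have "AE \<omega> in M. Q \<omega>" using aeBC aeW aeG unfolding Q_def by eventually_elim blast
  then obtain N where N: "{\<omega> \<in> space M. \<not> Q \<omega>} \<subseteq> N" "emeasure M N = 0" "N \<in> sets M" by (rule AE_E)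
  have Nnull: "N \<in> null_sets M" using N by (simp add: null_setsI)
  define Good where "Good = space M - N"
  have Good_sets: "Good \<in> sets M" unfolding Good_def using N(3) by auto
  have GoodQ: "Q \<omega>" if "\<omega> \<in> Good" for \<omega> using that N(1) unfolding Good_def by auto
  have Good_space: "\<omega> \<in> space M" if "\<omega> \<in> Good" for \<omega> using that unfolding Good_def by auto
  have aeGood: "AE \<omega> in M. \<omega> \<in> Good" by (rule AE_I'[OF Nnull]) (auto simp: Good_def)
  have Gbound: "\<exists>m0. \<forall>m\<ge>m0. \<forall>i\<in>{d * 2 ^ m <.. d * 2 ^ (m + 1)}. \<forall>t\<in>{0..real T}. \<bar>G i (lam i * t) \<omega>\<bar> \<le> b m"
    if \<omega>: "\<omega> \<in> Good" for \<omega> T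
  proof -
    have Q\<omega>: "Q \<omega>" by (rule GoodQ[OF \<omega>])
    then obtain m0 where m0: "\<And>m. m \<ge> m0 \<Longrightarrow> \<forall>i\<in>{d * 2 ^ m <.. d * 2 ^ (m + 1)}. \<forall>n k. k < (2::nat) ^ n \<longrightarrow>
            \<bar>W i ((real k + 1) * (\<Lambda> m * real T) / 2 ^ n) \<omega> - W i (real k * (\<Lambda> m * real T) / 2 ^ n) \<omega>\<bar> \<le> A m * qc ^ n"
      unfolding Q_def eventually_sequentially by blast
    show ?thesis
    proof (intro exI[of _ m0] allI impI ballI)
      fix m i t assume m: "m0 \<le> m" and i: "i \<in> {d * 2 ^ m <.. d * 2 ^ (m + 1)}" and t: "t \<in> {0..real T}"
      have i1: "1 \<le> i" using i by simp
      have W0: "W i 0 \<omega> = 0" using wiener[OF i1] Good_space[OF \<omega>] unfolding wiener_process_def by auto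
      have Wc: "continuous_on {0..} (\<lambda>u. W i u \<omega>)" using Q\<omega> i1 unfolding Q_def by auto
      have Gc: "continuous_on {0..} (\<lambda>u. G i u \<omega>)" and Geq: "\<And>t. 0 \<le> t \<Longrightarrow> G i t \<omega> = x i - integral {0..t} (\<lambda>u. G i u \<omega>) + sqrt 2 * W i t \<omega>"
        using Q\<omega> i1 unfolding Q_def by auto
      define L where "L = \<Lambda> m * real T"
      have L0: "0 \<le> L" unfolding L_def using \<Lambda>0[of m] by simp
      have A0: "0 \<le> A m" unfolding A_def using gc by simp
      have Wb: "\<bar>W i u \<omega>\<bar> \<le> A m / (1 - qc)" if u: "u \<in> {0..L}" for u
      proof (rule chain_bound[where f="\<lambda>u. W i u \<omega>", OF W0 A0 _ _ L0 _ _ u])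
        show "0 \<le> qc" "qc < 1" using qc by auto
        show "continuous_on {0..L} (\<lambda>u. W i u \<omega>)" by (rule continuous_on_subset[OF Wc]) auto
        show "\<bar>W i ((real k + 1) * L / 2 ^ n) \<omega> - W i (real k * L / 2 ^ n) \<omega>\<bar> \<le> A m * qc ^ n"
          if "k < 2 ^ n" for n k using m0[OF m] i that unfolding L_def by blast
      qed
      have li: "lam i \<le> \<Lambda> m" unfolding \<Lambda>_def by (rule lam_mono[OF i1]) (use i in simp)
      have lip: "0 < lam i" by (rule lampos[OF i1])
      have "\<bar>G i (lam i * t) \<omega>\<bar> \<le> \<bar>x i\<bar> + 3 * (A m / (1 - qc))"
      proof (rule ou_bound[where G="\<lambda>u. G i u \<omega>" and W="\<lambda>u. W i u \<omega>" and L="lam i * real T", OF Gc Wc Geq])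
        show "0 \<le> lam i * real T" using lip by simp
        show "lam i * t \<in> {0..lam i * real T}" using t lip by (auto intro: mult_left_mono)
        show "\<bar>W i u \<omega>\<bar> \<le> A m / (1 - qc)" if "u \<in> {0..lam i * real T}" for u
        proof (rule Wb)
          have "lam i * real T \<le> L" unfolding L_def using li by (intro mult_right_mono) auto
          then show "u \<in> {0..L}" using that by auto
        qed
      qed
      also have "\<dots> \<le> b m" unfolding b_def using Xm[OF i] by simp
      finally show "\<bar>G i (lam i * t) \<omega>\<bar> \<le> b m" .
    qed
  qed
  have DU: "(\<forall>t s. 0 \<le> t \<longrightarrow> (\<lambda>n. \<Sum>i\<in>{1..n}. G i (lam i * t) \<omega> *\<^sub>R schauder_S d e i s) \<longlonglongrightarrow> lim (\<lambda>n. \<Sum>i\<in>{1..n}. G i (lam i * t) \<omega> *\<^sub>R schauder_S d e i s)) \<and>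
     (\<forall>(T::nat) \<epsilon>. 0 < \<epsilon> \<longrightarrow> (\<exists>N. \<forall>n\<ge>N. \<forall>t\<in>{0..real T}. \<forall>s.
          norm ((\<Sum>i\<in>{1..n}. G i (lam i * t) \<omega> *\<^sub>R schauder_S d e i s) - lim (\<lambda>n. \<Sum>i\<in>{1..n}. G i (lam i * t) \<omega> *\<^sub>R schauder_S d e i s)) \<le> \<epsilon>))"
    if \<omega>: "\<omega> \<in> Good" for \<omega>
    using det_unif[where e=e and g="\<lambda>i t. G i (lam i * t) \<omega>", OF d1 en Gbound[OF \<omega>] b0 smb] by blast
  define Yv where "Yv = (\<lambda>t \<omega> s. lim (\<lambda>n. \<Sum>i\<in>{1..n}. G i (lam i * t) \<omega> *\<^sub>R schauder_S d e i s))"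
  define Y where "Y = (\<lambda>t \<omega>. if \<omega> \<in> Good then (\<lambda>s. Yv t \<omega> s) else (\<lambda>s::real. 0::'a))"
  have pX: "partial_X d e lam G n t \<omega> s = (\<Sum>i\<in>{1..n}. G i (lam i * t) \<omega> *\<^sub>R schauder_S d e i s)" for n t \<omega> s
    by (simp add: partial_X_def)
  have convY: "(\<lambda>n. partial_X d e lam G n t \<omega> s) \<longlonglongrightarrow> Y t \<omega> s" if "\<omega> \<in> Good" "0 \<le> t" for \<omega> t s
    using DU[OF that(1)] that unfolding pX Y_def Yv_def by simp
  have unifY: "\<exists>N. \<forall>n\<ge>N. \<forall>t\<in>{0..real T}. \<forall>s. norm (partial_X d e lam G n t \<omega> s - Y t \<omega> s) \<le> \<epsilon>"
    if "\<omega> \<in> Good" "0 < \<epsilon>" for \<omega> T \<epsilon>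
    using DU[OF that(1)] that unfolding pX Y_def Yv_def by simp
  have ulY: "uniform_limit {0..1} (\<lambda>n. partial_X d e lam G n t \<omega>) (Y t \<omega>) sequentially"
    if \<omega>: "\<omega> \<in> Good" and t: "0 \<le> t" for \<omega> t
  proof (rule uniform_limitI)
    fix \<epsilon> :: real assume "0 < \<epsilon>"
    then have "0 < \<epsilon> / 2" by simp
    from unifY[OF \<omega> this, of "nat \<lceil>t\<rceil>"] obtain N where
      N: "\<forall>n\<ge>N. \<forall>t'\<in>{0..real (nat \<lceil>t\<rceil>)}. \<forall>s. norm (partial_X d e lam G n t' \<omega> s - Y t' \<omega> s) \<le> \<epsilon> / 2" by blast
    have tT: "t \<in> {0..real (nat \<lceil>t\<rceil>)}" using t by (simp add: real_nat_ceiling_ge)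
    show "\<forall>\<^sub>F n in sequentially. \<forall>s\<in>{0..1}. dist (partial_X d e lam G n t \<omega> s) (Y t \<omega> s) < \<epsilon>"
      unfolding eventually_sequentially
    proof (intro exI[of _ N] allI impI ballI)
      fix n s assume "N \<le> n"
      then have "norm (partial_X d e lam G n t \<omega> s - Y t \<omega> s) \<le> \<epsilon> / 2" using N tT by blast
      then show "dist (partial_X d e lam G n t \<omega> s) (Y t \<omega> s) < \<epsilon>" using \<open>0 < \<epsilon>\<close> by (simp add: dist_norm)
    qed
  qed
  have pC0: "partial_X d e lam G n t \<omega> \<in> C0" for n t \<omega>
  proof -
    have "(\<lambda>s. \<Sum>i\<in>{1..n}. G i (lam i * t) \<omega> *\<^sub>R schauder_S d e i s) \<in> C0"
      by (rule C0_sum) (auto intro: schauder_S_C0)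
    then show ?thesis by (simp add: partial_X_def)
  qed
  have zeroC0: "(\<lambda>s::real. 0::'a) \<in> C0" unfolding C0_def by simp
  have YC0: "Y t \<omega> \<in> C0" if "0 \<le> t" for t \<omega>
  proof (cases "\<omega> \<in> Good")
    case False then show ?thesis unfolding Y_def using zeroC0 by simp
  next
    case True
    have cont: "continuous_on {0..1} (Y t \<omega>)"
    proof (rule uniform_limit_theorem[OF _ ulY[OF True that]])
      show "\<forall>\<^sub>F n in sequentially. continuous_on {0..1} (partial_X d e lam G n t \<omega>)"
        using pC0 unfolding C0_def by simp
    qed simp
    have z: "Y t \<omega> s = 0" if "s = 0 \<or> s \<notin> {0..1}" for s
    proof -
      have "(\<lambda>n. partial_X d e lam G n t \<omega> s) \<longlonglongrightarrow> Y t \<omega> s" by (rule convY[OF True \<open>0 \<le> t\<close>])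
      moreover have "partial_X d e lam G n t \<omega> s = 0" for n using pC0[of n t \<omega>] that unfolding C0_def by auto
      ultimately show ?thesis using LIMSEQ_unique[OF _ tendsto_const] by simp
    qed
    show ?thesis unfolding C0_def using cont z by auto
  qed
  have Gmeas: "(\<lambda>\<omega>. G i t \<omega>) \<in> borel_measurable M" if "1 \<le> i" "0 \<le> t" for i t
    using ou[OF that(1)] that(2) unfolding ou_process_def by auto
  have pmeas: "(\<lambda>\<omega>. partial_X d e lam G n t \<omega> s) \<in> borel_measurable M" if t: "0 \<le> t" for n t s
  proof -
    have "(\<lambda>\<omega>. \<Sum>i\<in>{1..n}. G i (lam i * t) \<omega> *\<^sub>R schauder_S d e i s) \<in> borel_measurable M"
    proof (rule borel_measurable_sum)
      fix i assume "i \<in> {1..n}"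
      then have i: "1 \<le> i" by simp
      have "(\<lambda>\<omega>. G i (lam i * t) \<omega>) \<in> borel_measurable M"
        by (rule Gmeas[OF i]) (use lampos[OF i] t in simp)
      then show "(\<lambda>\<omega>. G i (lam i * t) \<omega> *\<^sub>R schauder_S d e i s) \<in> borel_measurable M"
        by (intro borel_measurable_scaleR) auto
    qed
    then show ?thesis unfolding pX .
  qed
  have C1: "\<forall>t\<ge>0. \<forall>s. (\<lambda>\<omega>. Y t \<omega> s) \<in> borel_measurable M"
  proof (intro allI impI)
    fix t s :: real assume t: "0 \<le> t"
    show "(\<lambda>\<omega>. Y t \<omega> s) \<in> borel_measurable M"
    proof (rule borel_measurable_LIMSEQ_metric[where f="\<lambda>n \<omega>. if \<omega> \<in> Good then partial_X d e lam G n t \<omega> s else 0"])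
      show "(\<lambda>\<omega>. if \<omega> \<in> Good then partial_X d e lam G n t \<omega> s else 0) \<in> borel_measurable M" for n
        by (rule measurable_If_set[OF pmeas[OF t]]) (use Good_sets in auto)
      show "(\<lambda>n. if \<omega> \<in> Good then partial_X d e lam G n t \<omega> s else 0) \<longlonglongrightarrow> Y t \<omega> s" if "\<omega> \<in> space M" for \<omega>
        using convY[OF _ t] by (cases "\<omega> \<in> Good") (auto simp: Y_def)
    qed
  qed
  have C2: "\<forall>\<omega>\<in>space M. \<forall>t\<ge>0. Y t \<omega> \<in> C0" using YC0 by blast
  have C4: "\<forall>t\<ge>0. AE \<omega> in M. uniform_limit {0..1} (\<lambda>n. partial_X d e lam G n t \<omega>) (Y t \<omega>) sequentially"
    using aeGood ulY by (auto elim: AE_mp)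
  have SB: "\<exists>C>0. \<forall>s. norm (schauder_S d e i s) \<le> C" for i
  proof -
    have "continuous_on {0..1} (schauder_S d e i)" using schauder_S_C0[of d e i] unfolding C0_def by simp
    then have "compact (schauder_S d e i ` {0..1})" by (rule compact_continuous_image) simp
    then have "bounded (schauder_S d e i ` {0..1})" by (rule compact_imp_bounded)
    then obtain B where B: "B > 0" "\<And>y. y \<in> schauder_S d e i ` {0..1} \<Longrightarrow> norm y \<le> B"
      unfolding bounded_pos by blast
    have "norm (schauder_S d e i s) \<le> B" for s
    proof (cases "s \<in> {0..1}")
      case True then show ?thesis using B by auto
    next
      case False then have "schauder_S d e i s = 0" using schauder_S_C0[of d e i] unfolding C0_def by auto
      then show ?thesis using B by simp
    qed
    then show ?thesis using B by blast
  qed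
  define Cb where "Cb = (\<lambda>i. SOME C. C > 0 \<and> (\<forall>s. norm (schauder_S d e i s) \<le> C))"
  have Cb: "Cb i > 0" "norm (schauder_S d e i s) \<le> Cb i" for i s
    using someI_ex[OF SB[of i]] unfolding Cb_def by auto
  have Pdiff: "norm (partial_X d e lam G n t \<omega> s - partial_X d e lam G n t0 \<omega> s)
      \<le> (\<Sum>i\<in>{1..n}. \<bar>G i (lam i * t) \<omega> - G i (lam i * t0) \<omega>\<bar> * Cb i)" for n t t0 \<omega> s
  proof -
    have "partial_X d e lam G n t \<omega> s - partial_X d e lam G n t0 \<omega> s
        = (\<Sum>i\<in>{1..n}. (G i (lam i * t) \<omega> - G i (lam i * t0) \<omega>) *\<^sub>R schauder_S d e i s)"
      unfolding pX by (simp add: scaleR_diff_left sum_subtractf)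
    also have "norm \<dots> \<le> (\<Sum>i\<in>{1..n}. norm ((G i (lam i * t) \<omega> - G i (lam i * t0) \<omega>) *\<^sub>R schauder_S d e i s))"
      by (rule norm_sum)
    also have "\<dots> \<le> (\<Sum>i\<in>{1..n}. \<bar>G i (lam i * t) \<omega> - G i (lam i * t0) \<omega>\<bar> * Cb i)"
      by (rule sum_mono) (auto intro: mult_left_mono Cb)
    finally show ?thesis .
  qed
  have C3: "\<forall>\<omega>\<in>space M. \<forall>t0\<ge>0. uniform_limit {0..1} (\<lambda>t. Y t \<omega>) (Y t0 \<omega>) (at t0 within {0..})"
  proof (intro ballI allI impI)
    fix \<omega> t0 assume \<omega>: "\<omega> \<in> space M" and t0: "0 \<le> (t0::real)"
    show "uniform_limit {0..1} (\<lambda>t. Y t \<omega>) (Y t0 \<omega>) (at t0 within {0..})"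
    proof (cases "\<omega> \<in> Good")
      case False
      then show ?thesis by (intro uniform_limitI) (simp add: Y_def)
    next
      case True
      show ?thesis
      proof (rule uniform_limitI)
        fix \<epsilon> :: real assume \<epsilon>: "0 < \<epsilon>"
        define T where "T = nat \<lceil>t0\<rceil> + 1"
        have t0T: "t0 + 1 \<le> real T" unfolding T_def by (simp add: real_nat_ceiling_ge)
        from unifY[OF True _, of "\<epsilon> / 3" T] \<epsilon> obtain n where
          n: "\<forall>t\<in>{0..real T}. \<forall>s. norm (partial_X d e lam G n t \<omega> s - Y t \<omega> s) \<le> \<epsilon> / 3" by auto
        define h where "h = (\<lambda>t. \<Sum>i\<in>{1..n}. \<bar>G i (lam i * t) \<omega> - G i (lam i * t0) \<omega>\<bar> * Cb i)"
        have Gcont: "continuous_on {0..} (\<lambda>t. G i (lam i * t) \<omega>)" if i: "1 \<le> i" for i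
        proof -
          have Gc: "continuous_on {0..} (\<lambda>u. G i u \<omega>)" using GoodQ[OF True] i unfolding Q_def by auto
          show ?thesis
            by (rule continuous_on_compose2[OF Gc, where f="\<lambda>t. lam i * t"])
               (use lampos[OF i] in \<open>auto intro!: continuous_intros\<close>)
        qed
        have "(h \<longlongrightarrow> (\<Sum>i\<in>{1..n}. \<bar>G i (lam i * t0) \<omega> - G i (lam i * t0) \<omega>\<bar> * Cb i)) (at t0 within {0..})"
          unfolding h_def
        proof (intro tendsto_intros)
          fix i assume "i \<in> {1..n}"
          then have i: "1 \<le> i" by simp
          show "((\<lambda>t. G i (lam i * t) \<omega>) \<longlongrightarrow> G i (lam i * t0) \<omega>) (at t0 within {0..})"
            using Gcont[OF i] t0 unfolding continuous_on_def by auto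
        qed
        then have hlim: "(h \<longlongrightarrow> 0) (at t0 within {0..})" by simp
        have ev1: "\<forall>\<^sub>F t in at t0 within {0..}. h t < \<epsilon> / 3" using order_tendstoD(2)[OF hlim, of "\<epsilon> / 3"] \<epsilon> by simp
        have ev2: "\<forall>\<^sub>F t in at t0 within {0..}. t < t0 + 1"
          using order_tendstoD(2)[OF tendsto_ident_at[of t0 "{0..}"], of "t0 + 1"] by simp
        have ev3: "\<forall>\<^sub>F t in at t0 within {0..}. t \<in> {0..}"
          unfolding eventually_at_filter by simp
        show "\<forall>\<^sub>F t in at t0 within {0..}. \<forall>s\<in>{0..1}. dist (Y t \<omega> s) (Y t0 \<omega> s) < \<epsilon>"
          using ev1 ev2 ev3
        proof eventually_elim
          case (elim t)
          have tT: "t \<in> {0..real T}" "t0 \<in> {0..real T}" using elim t0 t0T by auto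
          show ?case
          proof
            fix s :: real assume "s \<in> {0..1}"
            have a: "norm (Y t \<omega> s - partial_X d e lam G n t \<omega> s) \<le> \<epsilon> / 3"
              using n tT(1) by (simp add: norm_minus_commute)
            have b: "norm (partial_X d e lam G n t \<omega> s - partial_X d e lam G n t0 \<omega> s) \<le> h t"
              unfolding h_def by (rule Pdiff)
            have c: "norm (partial_X d e lam G n t0 \<omega> s - Y t0 \<omega> s) \<le> \<epsilon> / 3" using n tT(2) by simp
            have "dist (Y t \<omega> s) (Y t0 \<omega> s) \<le> norm (Y t \<omega> s - partial_X d e lam G n t \<omega> s)
                + norm (partial_X d e lam G n t \<omega> s - partial_X d e lam G n t0 \<omega> s)
                + norm (partial_X d e lam G n t0 \<omega> s - Y t0 \<omega> s)"
              unfolding dist_norm by (rule order_trans[OF _ add_mono[OF norm_triangle_ineq order_refl]]) (rule order_trans[OF _ norm_triangle_ineq], simp)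
            then show "dist (Y t \<omega> s) (Y t0 \<omega> s) < \<epsilon>" using a b c elim by linarith
          qed
        qed
      qed
    qed
  qed
  have C5: "\<forall>ts :: real list. sorted_wrt (<) ts \<longrightarrow> (\<forall>t\<in>set ts. 0 \<le> t) \<longrightarrow>
              weak_conv_C0_tuples M (length ts)
                (\<lambda>n \<omega>. map (\<lambda>t. partial_X d e lam G n t \<omega>) ts)
                (\<lambda>\<omega>. map (\<lambda>t. Y t \<omega>) ts)"
  proof (intro allI impI)
    fix ts :: "real list" assume tpos: "\<forall>t\<in>set ts. 0 \<le> t"
    define m where "m = length ts"
    define Z where "Z = (\<lambda>n \<omega>. map (\<lambda>t. partial_X d e lam G n t \<omega>) ts)"
    define YL where "YL = (\<lambda>\<omega>. map (\<lambda>t. Y t \<omega>) ts)"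
    have tsp: "0 \<le> ts ! p" if "p < m" for p using tpos that unfolding m_def by auto
    show "weak_conv_C0_tuples M (length ts) (\<lambda>n \<omega>. map (\<lambda>t. partial_X d e lam G n t \<omega>) ts) (\<lambda>\<omega>. map (\<lambda>t. Y t \<omega>) ts)"
      unfolding weak_conv_C0_tuples_def m_def[symmetric] Z_def[symmetric] YL_def[symmetric]
    proof (intro allI impI)
      fix F :: "(real \<Rightarrow> 'a) list \<Rightarrow> real" assume F: "bcont_test m F"
      obtain B where B: "\<And>\<Gamma>. \<Gamma> \<in> C0_tuples m \<Longrightarrow> \<bar>F \<Gamma>\<bar> \<le> B" using F unfolding bcont_test_def by blast
      have ZC: "Z n \<omega> \<in> C0_tuples m" for n \<omega> unfolding Z_def C0_tuples_def m_def using pC0 by auto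
      have YC: "YL \<omega> \<in> C0_tuples m" for \<omega> unfolding YL_def C0_tuples_def m_def using YC0 tpos by auto
      define \<Phi> where "\<Phi> = (\<lambda>n (v :: nat \<times> nat \<Rightarrow> real). map (\<lambda>p. (\<lambda>s. \<Sum>i\<in>{1..n}. v (i, p) *\<^sub>R schauder_S d e i s)) [0..<m])"
      define V where "V = (\<lambda>\<omega> (ip :: nat \<times> nat). if 1 \<le> fst ip \<and> snd ip < m then G (fst ip) (lam (fst ip) * ts ! snd ip) \<omega> else 0)"
      have Z\<Phi>: "Z n \<omega> = \<Phi> n (V \<omega>)" for n \<omega>
      proof (rule nth_equalityI)
        show "length (Z n \<omega>) = length (\<Phi> n (V \<omega>))" unfolding Z_def \<Phi>_def m_def by simp
        fix p assume "p < length (Z n \<omega>)"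
        then have p: "p < m" unfolding Z_def m_def by simp
        show "Z n \<omega> ! p = \<Phi> n (V \<omega>) ! p"
          unfolding Z_def \<Phi>_def V_def using p by (auto simp: m_def pX intro!: ext sum.cong)
      qed
      have \<Phi>C: "\<Phi> n v \<in> C0_tuples m" for n v
        unfolding \<Phi>_def C0_tuples_def by (auto intro!: C0_sum schauder_S_C0)
      have \<Phi>cont: "(\<lambda>k. tupledist (\<Phi> n v) (\<Phi> n (u k))) \<longlonglongrightarrow> 0"
        if uv: "\<And>j. (\<lambda>k. u k j) \<longlonglongrightarrow> v j" for n u v
      proof -
        define D where "D = (\<lambda>k. \<Sum>p<m. \<Sum>i\<in>{1..n}. \<bar>v (i, p) - u k (i, p)\<bar> * Cb i)"
        have "D \<longlonglongrightarrow> (\<Sum>p<m. \<Sum>i\<in>{1..n}. \<bar>v (i, p) - v (i, p)\<bar> * Cb i)"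
          unfolding D_def by (intro tendsto_intros uv)
        then have D0: "D \<longlonglongrightarrow> 0" by simp
        have le: "tupledist (\<Phi> n v) (\<Phi> n (u k)) \<le> D k" for k
        proof (rule tupledist_le)
          have Cb0: "0 \<le> Cb i" for i using Cb(1)[of i] by simp
          show "0 \<le> D k" unfolding D_def using Cb0 by (auto intro!: sum_nonneg)
          fix p s assume p: "p < length (\<Phi> n v)"
          then have pm: "p < m" unfolding \<Phi>_def by simp
          have "(\<Phi> n v ! p) s - (\<Phi> n (u k) ! p) s = (\<Sum>i\<in>{1..n}. (v (i, p) - u k (i, p)) *\<^sub>R schauder_S d e i s)"
            unfolding \<Phi>_def using pm by (simp add: scaleR_diff_left sum_subtractf)
          also have "norm \<dots> \<le> (\<Sum>i\<in>{1..n}. norm ((v (i, p) - u k (i, p)) *\<^sub>R schauder_S d e i s))" by (rule norm_sum)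
          also have "\<dots> \<le> (\<Sum>i\<in>{1..n}. \<bar>v (i, p) - u k (i, p)\<bar> * Cb i)"
            by (rule sum_mono) (auto intro: mult_left_mono Cb)
          also have "\<dots> \<le> D k" unfolding D_def
            by (rule member_le_sum[where f="\<lambda>p. \<Sum>i\<in>{1..n}. \<bar>v (i, p) - u k (i, p)\<bar> * Cb i"])
               (use pm Cb0 in \<open>auto intro!: sum_nonneg\<close>)
          finally show "norm ((\<Phi> n v ! p) s - (\<Phi> n (u k) ! p) s) \<le> D k" .
        qed
        show ?thesis
          by (rule real_tendsto_sandwich[OF _ _ tendsto_const D0]) (use le tupledist_nonneg in \<open>auto intro: always_eventually\<close>)
      qed
      have Vm: "(\<lambda>\<omega>. V \<omega> j) \<in> borel_measurable M" for j
      proof (cases "1 \<le> fst j \<and> snd j < m")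
        case True
        have "(\<lambda>\<omega>. G (fst j) (lam (fst j) * ts ! snd j) \<omega>) \<in> borel_measurable M"
          by (rule Gmeas) (use True lampos[of "fst j"] tsp[of "snd j"] in auto)
        then show ?thesis unfolding V_def using True by simp
      next
        case False
        then have "(\<lambda>\<omega>. V \<omega> j) = (\<lambda>\<omega>. 0)" unfolding V_def by auto
        then show ?thesis by simp
      qed
      have FZm: "(\<lambda>\<omega>. F (Z n \<omega>)) \<in> borel_measurable M" for n
        unfolding Z\<Phi> by (rule F_comp_meas[OF F \<Phi>C \<Phi>cont Vm])
      have FZlim: "(\<lambda>n. F (Z n \<omega>)) \<longlonglongrightarrow> F (YL \<omega>)" if \<omega>: "\<omega> \<in> Good" for \<omega>
      proof (rule LIMSEQ_I)
        fix r :: real assume r: "0 < r"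
        obtain \<delta> where \<delta>: "\<delta> > 0" "\<And>\<Delta>. \<Delta> \<in> C0_tuples m \<Longrightarrow> tupledist (YL \<omega>) \<Delta> < \<delta> \<Longrightarrow> \<bar>F \<Delta> - F (YL \<omega>)\<bar> < r"
          using F YC[of \<omega>] r unfolding bcont_test_def by blast
        define T where "T = nat \<lceil>sum_list ts\<rceil>"
        have tT: "ts ! p \<in> {0..real T}" if "p < m" for p
        proof -
          have "ts ! p \<le> sum_list ts" by (rule member_le_sum_list) (use that tpos in \<open>auto simp: m_def\<close>)
          then show ?thesis using tsp[OF that] unfolding T_def by (simp add: real_nat_ceiling_ge order_trans)
        qed
        from unifY[OF \<omega>, of "\<delta> / 2" T] \<delta>(1) obtain N where
          N: "\<forall>n\<ge>N. \<forall>t\<in>{0..real T}. \<forall>s. norm (partial_X d e lam G n t \<omega> s - Y t \<omega> s) \<le> \<delta> / 2" by auto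
        show "\<exists>no. \<forall>n\<ge>no. norm (F (Z n \<omega>) - F (YL \<omega>)) < r"
        proof (intro exI[of _ N] allI impI)
          fix n assume n: "N \<le> n"
          have "tupledist (YL \<omega>) (Z n \<omega>) \<le> \<delta> / 2"
          proof (rule tupledist_le)
            fix p s assume "p < length (YL \<omega>)"
            then have p: "p < m" unfolding YL_def m_def by simp
            have "norm (partial_X d e lam G n (ts ! p) \<omega> s - Y (ts ! p) \<omega> s) \<le> \<delta> / 2" using N n tT[OF p] by blast
            then show "norm ((YL \<omega> ! p) s - (Z n \<omega> ! p) s) \<le> \<delta> / 2"
              unfolding YL_def Z_def using p by (simp add: m_def norm_minus_commute)
          qed (use \<delta> in simp)
          then have "tupledist (YL \<omega>) (Z n \<omega>) < \<delta>" using \<delta>(1) by simp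
          then show "norm (F (Z n \<omega>) - F (YL \<omega>)) < r" using \<delta>(2)[OF ZC] by simp
        qed
      qed
      define c0 where "c0 = F (map (\<lambda>t. (\<lambda>s::real. 0::'a)) ts)"
      have FYm: "(\<lambda>\<omega>. F (YL \<omega>)) \<in> borel_measurable M"
      proof (rule borel_measurable_LIMSEQ_real[where u="\<lambda>n \<omega>. if \<omega> \<in> Good then F (Z n \<omega>) else c0"])
        show "(\<lambda>n. if \<omega> \<in> Good then F (Z n \<omega>) else c0) \<longlonglongrightarrow> F (YL \<omega>)" if "\<omega> \<in> space M" for \<omega>
        proof (cases "\<omega> \<in> Good")
          case True then show ?thesis using FZlim by simp
        next
          case False
          then have "YL \<omega> = map (\<lambda>t. (\<lambda>s::real. 0::'a)) ts" unfolding YL_def Y_def by simp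
          then show ?thesis using False unfolding c0_def by simp
        qed
        show "(\<lambda>\<omega>. if \<omega> \<in> Good then F (Z n \<omega>) else c0) \<in> borel_measurable M" for n
          by (rule measurable_If_set[OF FZm]) (use Good_sets in auto)
      qed
      show "(\<lambda>n. integral\<^sup>L M (\<lambda>\<omega>. F (Z n \<omega>))) \<longlonglongrightarrow> integral\<^sup>L M (\<lambda>\<omega>. F (YL \<omega>))"
      proof (rule integral_dominated_convergence[where w="\<lambda>_. B"])
        show "(\<lambda>\<omega>. F (YL \<omega>)) \<in> borel_measurable M" by (rule FYm)
        show "(\<lambda>\<omega>. F (Z n \<omega>)) \<in> borel_measurable M" for n by (rule FZm)
        show "integrable M (\<lambda>_. B)" by simp
        show "AE \<omega> in M. (\<lambda>n. F (Z n \<omega>)) \<longlonglongrightarrow> F (YL \<omega>)" using aeGood by (auto elim: AE_mp intro: FZlim)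
        show "AE \<omega> in M. norm (F (Z n \<omega>)) \<le> B" for n using B[OF ZC] by simp
      qed
    qed
  qed
  show ?thesis
    by (rule exI[of _ Y]) (use C1 C2 C3 C4 C5 in blast)
qed

end
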